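(* Let $\mathbf k$ be an algebraically closed field of characteristic $p>0$ and $S=\mathbf k[x_1,\dots,x_n]$. An ideal $I\subseteq S$ is $\mathrm{GL}_n(\mathbf k)$-invariant if and only if $I=I_B$ for some finite subset $B\subseteq C(n,p)$, i.e. if and only if $I$ is a (finite) sum of carry ideals $I_{c,d}$.
   Context: $\mathrm{GL}_n(\mathbf k)$ acts on $S$ by $\mathbf k$-algebra automorphisms, $g=(g_{i,j})$ sending $x_i\mapsto \sum_k g_{k,i}x_k$; an ideal $I$ is invariant if $g\cdot I\subseteq I$ for all $g$. Base-$p$ expansion: $a=\sum_j a_jp^j$, $0\le a_j\le p-1$; for $d\ge1$, $M=\max\{j:d_j\ne0\}$. For a monomial $x^{\underline b}=x_1^{b_1}\cdots x_n^{b_n}$ of degree $d$, with $b_{i,j}$ the $j$-th base-$p$ digit of $b_i$, the carry pattern $c(\underline b)=(c_1,\dots,c_M)$ is defined by $\sum_{i=1}^n\sum_{0\le j<\ell}b_{i,j}p^j=c_\ell p^\ell+\sum_{0\le j<\ell}d_jp^j$ for $1\le\ell\le M$ (convention $c_i=0$ for $i<1$, $i>M$). $C(d,n,p)$ is the set of carry patterns of degree-$d$ monomials in $n$ variables, partially ordered componentwise, and $C(n,p)=\bigsqcup_{d\ge0}C(d,n,p)$. For $c\in C(d,n,p)$, the carry ideal $I_{c,d}$ is the ideal of $S$ generated by all monomials of degree $d$ whose carry pattern is $\le c$. For finite $B\subseteq C(n,p)$, writing $B_d=B\cap C(d,n,p)$, set $I_B=\sum_{d\ge0}\sum_{c\in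 B_d}I_{c,d}$. *)

theory Defs
  imports "HOL-Computational_Algebra.Polynomial" "HOL-Library.Poly_Mapping"
begin

(* Polynomial ring S = k[x_i | i :: 'n] in n = CARD('n) variables, represented as
  finitely supported maps from monomials (exponent vectors 'n \<Rightarrow>\<^sub>0 nat) to coefficients.
  Multiplication is the convolution product from Poly_Mapping. *)

type_synonym ('n, 'k) mpoly = "('n \<Rightarrow>\<^sub>0 nat) \<Rightarrow>\<^sub>0 'k"

definition monomial_x :: "('n \<Rightarrow>\<^sub>0 nat) \<Rightarrow> ('n, 'k::field) mpoly" where
  "monomial_x m = Poly_Mapping.single m 1"

definition var :: "'n \<Rightarrow> ('n, 'k::field) mpoly" where
  "var i = monomial_x (Poly_Mapping.single i 1)"

definition cst :: "'k::field \<Rightarrow> ('n, 'k) mpoly" where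
  "cst c = Poly_Mapping.single 0 c"

definition is_ideal :: "('n, 'k::field) mpoly set \<Rightarrow> bool" where
  "is_ideal I \<longleftrightarrow> 0 \<in> I \<and> (\<forall>a\<in>I. \<forall>b\<in>I. a + b \<in> I) \<and> (\<forall>a\<in>I. \<forall>r. r * a \<in> I)"

definition ideal_gen :: "('n, 'k::field) mpoly set \<Rightarrow> ('n, 'k) mpoly set" where
  "ideal_gen G = \<Inter>{I. is_ideal I \<and> G \<subseteq> I}"

definition GL :: "('n::finite \<Rightarrow> 'n \<Rightarrow> 'k::field) set" where
  "GL = {g. \<exists>h. (\<forall>i j. (\<Sum>l\<in>UNIV. g i l * h l j) = (if i = j then 1 else 0))
                 \<and> (\<forall>i j. (\<Sum>l\<in>UNIV. h i l * g l j) = (if i = j then 1 else 0))}"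

definition act :: "('n::finite \<Rightarrow> 'n \<Rightarrow> 'k::field) \<Rightarrow> ('n, 'k) mpoly \<Rightarrow> ('n, 'k) mpoly" where
  "act g f = (\<Sum>m\<in>Poly_Mapping.keys f.
      cst (Poly_Mapping.lookup f m) *
      (\<Prod>i\<in>UNIV. (\<Sum>k\<in>UNIV. cst (g k i) * var k) ^ Poly_Mapping.lookup m i))"

definition GL_invariant :: "('n::finite, 'k::field) mpoly set \<Rightarrow> bool" where
  "GL_invariant I \<longleftrightarrow> (\<forall>g\<in>GL. act g ` I \<subseteq> I)"

definition digit :: "nat \<Rightarrow> nat \<Rightarrow> nat \<Rightarrow> nat" where
  "digit p a j = a div p ^ j mod p"

definition topdeg :: "nat \<Rightarrow> nat \<Rightarrow> nat" where
  "topdeg p d = Max {j. digit p d j \<noteq> 0}"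

definition mdeg :: "('n::finite \<Rightarrow>\<^sub>0 nat) \<Rightarrow> nat" where
  "mdeg b = (\<Sum>i\<in>UNIV. Poly_Mapping.lookup b i)"

(* Carry pattern of a monomial x^b of degree d = mdeg b, as a function of l,
  equal to 0 outside 1..M (and identically 0 when d = 0, the empty pattern).
  c_l is the unique value with
  \<Sum>_i \<Sum>_{j<l} b_{i,j} p^j = c_l p^l + \<Sum>_{j<l} d_j p^j. *)
definition carry :: "nat \<Rightarrow> ('n::finite \<Rightarrow>\<^sub>0 nat) \<Rightarrow> nat \<Rightarrow> nat" where
  "carry p b l = (let d = mdeg b in
     if d \<ge> 1 \<and> 1 \<le> l \<and> l \<le> topdeg p d then
       ((\<Sum>i\<in>UNIV. \<Sum>j<l. digit p (Poly_Mapping.lookup b i) j * p ^ j)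
          - (\<Sum>j<l. digit p d j * p ^ j)) div p ^ l
     else 0)"

(* C(d,n,p), and C(n,p) as the disjoint union of pairs (d, c). *)
definition carry_patterns :: "'n::finite itself \<Rightarrow> nat \<Rightarrow> nat \<Rightarrow> (nat \<Rightarrow> nat) set" where
  "carry_patterns _ p d = {carry p (b :: 'n \<Rightarrow>\<^sub>0 nat) | b. mdeg b = d}"

definition all_carry_patterns :: "'n::finite itself \<Rightarrow> nat \<Rightarrow> (nat \<times> (nat \<Rightarrow> nat)) set" where
  "all_carry_patterns T p = {(d, c). c \<in> carry_patterns T p d}"

(* Carry ideal I_{c,d}; componentwise order on patterns is the pointwise order. *)
definition carry_ideal :: "nat \<Rightarrow> nat \<Rightarrow> (nat \<Rightarrow> nat) \<Rightarrow> ('n::finite, 'k::field) mpoly set" where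
  "carry_ideal p d c = ideal_gen {monomial_x b | b. mdeg b = d \<and> carry p b \<le> c}"

definition carry_sum_ideal :: "nat \<Rightarrow> (nat \<times> (nat \<Rightarrow> nat)) set \<Rightarrow> ('n::finite, 'k::field) mpoly set" where
  "carry_sum_ideal p B = ideal_gen (\<Union>(d, c)\<in>B. carry_ideal p d c)"

end

theory Submission
  imports Defs
begin


lemma digit_lt: "p > 0 \<Longrightarrow> digit p a j < p"
  by (simp add: digit_def)

lemma mod_pow_digits:
  assumes "p > 0" shows "a mod p ^ l = (\<Sum>j<l. digit p a j * p ^ j)"
proof (induction l)
  case 0 then show ?case by simp
next
  case (Suc l)
  have "a mod p ^ Suc l = a mod (p ^ l * p)" by (simp add: mult.commute)
  also have "\<dots> = p ^ l * (a div p ^ l mod p) + a mod p ^ l" by (rule mod_mult2_eq)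
  finally show ?case using Suc by (simp add: digit_def mult.commute)
qed

lemma n_less_pow: "(p::nat) > 1 \<Longrightarrow> n < p ^ n"
proof -
  assume "p > 1"
  have "n < 2 ^ n" by (rule less_exp)
  also have "(2::nat) ^ n \<le> p ^ n" using \<open>p > 1\<close> by (intro power_mono) auto
  finally show ?thesis .
qed

lemma digits_eq_imp_eq:
  assumes "p > 1" "\<And>j. digit p a j = digit p b j" shows "a = b"
proof -
  have "a < p ^ (a + b)" "b < p ^ (a + b)"
    using n_less_pow[OF assms(1), of "a+b"] by auto
  then have "a = a mod p ^ (a+b)" "b = b mod p ^ (a+b)" by auto
  moreover have "a mod p ^ (a+b) = b mod p ^ (a+b)"
    using assms by (simp add: mod_pow_digits[of p])
  ultimately show ?thesis by simp
qed

lemma digit_add_low: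
  assumes "p > 0" "a < p ^ k"
  shows "digit p (a + p ^ k * y) m = (if m < k then digit p a m else digit p y (m - k))"
proof (cases "m < k")
  case True
  obtain r where r: "k = Suc (m + r)" using True less_imp_Suc_add by blast
  have pk: "p ^ k = p ^ m * (p * p ^ r)" using r by (simp add: power_add)
  have "(a + p ^ k * y) div p ^ m = (a + p ^ m * (p * p ^ r * y)) div p ^ m"
    by (simp add: pk mult.assoc)
  also have "\<dots> = a div p ^ m + p * p ^ r * y" using assms(1) by simp
  finally have "(a + p ^ k * y) div p ^ m mod p = (a div p ^ m + p * (p ^ r * y)) mod p"
    by (simp add: mult.assoc)
  also have "\<dots> = a div p ^ m mod p" by simp
  finally show ?thesis using True by (simp add: digit_def)
next
  case False
  have "p ^ m = p ^ k * p ^ (m - k)" using False by (simp flip: power_add)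
  then have "(a + p ^ k * y) div p ^ m = (a + p ^ k * y) div p ^ k div p ^ (m - k)"
    by (simp add: div_mult2_eq)
  also have "(a + p ^ k * y) div p ^ k = y" using assms by simp
  finally show ?thesis using False by (simp add: digit_def)
qed

lemma digit_decomp_gen:
  assumes "p > 0" "lo < p ^ k" "t < p"
  shows "digit p (lo + p ^ k * (t + p * h)) m =
     (if m < k then digit p lo m else if m = k then t else digit p h (m - k - 1))"
proof -
  have *: "digit p (t + p * h) j = (if j = 0 then t else digit p h (j - 1))" for j
    using digit_add_low[of p t 1 h j] assms by (auto simp: digit_def)
  show ?thesis using assms by (simp add: digit_add_low *)
qed

lemma digit_decomp:
  assumes "p > 0"
  obtains lo h where "x = lo + p ^ k * (digit p x k + p * h)" "lo < p ^ k"
proof -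
  have "x = x mod p ^ k + p ^ k * (x div p ^ k)" by simp
  moreover have "x div p ^ k = x div p ^ k mod p + p * (x div p ^ k div p)" by simp
  ultimately have "x = x mod p ^ k + p ^ k * (digit p x k + p * (x div p ^ k div p))"
    by (simp add: digit_def)
  then show ?thesis using that assms by auto
qed

lemma digit_plus_pow:
  assumes "p > 0" "digit p x k + 1 < p"
  shows "digit p (x + p ^ k) m = digit p x m + (if m = k then 1 else 0)"
proof -
  obtain lo h where x: "x = lo + p ^ k * (digit p x k + p * h)" and lo: "lo < p ^ k"
    using digit_decomp[OF assms(1)] by metis
  define t where "t = digit p x k"
  have x': "x = lo + p ^ k * (t + p * h)" using x t_def by simp
  have x2: "x + p ^ k = lo + p ^ k * ((t + 1) + p * h)" using x' by (simp add: algebra_simps)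
  have a: "digit p (x + p ^ k) m = (if m < k then digit p lo m else if m = k then t + 1 else digit p h (m - k - 1))"
    unfolding x2 using assms t_def lo by (subst digit_decomp_gen) auto
  have b: "digit p x m = (if m < k then digit p lo m else if m = k then t else digit p h (m - k - 1))"
    using assms t_def lo digit_lt[of p x k] by (subst x', subst digit_decomp_gen) auto
  show ?thesis using a b by auto
qed

lemma digit_minus_pow:
  assumes "p > 0" "digit p x k \<ge> 1"
  shows "p ^ k \<le> x" "digit p (x - p ^ k) m = digit p x m - (if m = k then 1 else 0)"
proof -
  obtain lo h where x: "x = lo + p ^ k * (digit p x k + p * h)" and lo: "lo < p ^ k"
    using digit_decomp[OF assms(1)] by metis
  define t where "t = digit p x k"
  have x': "x = lo + p ^ k * (t + p * h)" using x t_def by simp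
  have tp: "t < p" using assms t_def digit_lt by blast
  have "p ^ k * 1 \<le> p ^ k * (t + p * h)" using assms t_def by (intro mult_le_mono2) auto
  then show "p ^ k \<le> x" using x' by linarith
  have e: "p ^ k * (t + p * h) = p ^ k * ((t - 1) + p * h) + p ^ k"
  proof -
    have "t \<ge> 1" using assms t_def by simp
    then obtain t' where "t = Suc t'" by (metis Suc_le_D One_nat_def)
    then show ?thesis by (simp add: algebra_simps)
  qed
  have x2: "x - p ^ k = lo + p ^ k * ((t - 1) + p * h)" using x' e by linarith
  have a: "digit p (x - p ^ k) m = (if m < k then digit p lo m else if m = k then t - 1 else digit p h (m - k - 1))"
    unfolding x2 using assms t_def lo tp by (subst digit_decomp_gen) auto
  have b: "digit p x m = (if m < k then digit p lo m else if m = k then t else digit p h (m - k - 1))"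
    using assms t_def lo tp by (subst x', subst digit_decomp_gen) auto
  show "digit p (x - p ^ k) m = digit p x m - (if m = k then 1 else 0)" using a b by auto
qed

lemma digit_carry_pow:
  assumes "p > 0" "digit p x k = p - 1" "digit p x (Suc k) + 1 < p"
  shows "digit p (x + p ^ k) m = (if m = k then 0 else if m = Suc k then digit p x m + 1 else digit p x m)"
proof -
  obtain lo h where x: "x = lo + p ^ k * (digit p x k + p * h)" and lo: "lo < p ^ k"
    using digit_decomp[OF assms(1)] by metis
  have x': "x = lo + p ^ k * ((p - 1) + p * h)" using x assms by simp
  have hd: "digit p h j = digit p x (Suc k + j)" for j
    using assms lo by (subst x', subst digit_decomp_gen) auto
  define u h' where "u = h mod p" "h' = h div p"
  have h: "h = u + p * h'" using u_h'_def by simp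
  have u: "u = digit p x (Suc k)" using hd[of 0] u_h'_def by (simp add: digit_def)
  have up: "u + 1 < p" using u assms by simp
  have x2: "x + p ^ k = lo + p ^ k * (0 + p * ((u + 1) + p * h'))"
  proof -
    have "x + p ^ k = lo + p ^ k * ((p - 1) + p * h + 1)" using x' by (simp add: algebra_simps)
    also have "(p - 1) + p * h + 1 = p * (h + 1)" using assms(1) by (simp add: algebra_simps)
    finally show ?thesis using h by (simp add: algebra_simps)
  qed
  have a: "digit p (x + p ^ k) m = (if m < k then digit p lo m else if m = k then 0 else digit p ((u + 1) + p * h') (m - k - 1))"
    unfolding x2 using assms lo by (subst digit_decomp_gen) auto
  have c: "digit p ((u + 1) + p * h') j = (if j = 0 then u + 1 else digit p h' (j - 1))" for j
    using digit_decomp_gen[of p 0 0 "u+1" h' j] up assms by simp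
  have c2: "digit p (u + p * h') j = (if j = 0 then u else digit p h' (j - 1))" for j
    using digit_decomp_gen[of p 0 0 "u" h' j] up assms by simp
  have b: "digit p x m = (if m < k then digit p lo m else if m = k then p - 1 else digit p h (m - k - 1))"
    using assms lo by (subst x', subst digit_decomp_gen) auto
  show ?thesis using a b c c2 h u by (auto simp: hd)
qed


definition colsum :: "nat \<Rightarrow> ('n::finite \<Rightarrow> nat) \<Rightarrow> nat \<Rightarrow> nat" where
  "colsum p f k = (\<Sum>i\<in>UNIV. digit p (f i) k)"

definition Sm :: "nat \<Rightarrow> ('n::finite \<Rightarrow> nat) \<Rightarrow> nat \<Rightarrow> nat" where
  "Sm p f l = (\<Sum>i\<in>UNIV. f i mod p ^ l)"

definition mv :: "('n \<Rightarrow> nat) \<Rightarrow> 'n \<Rightarrow> 'n \<Rightarrow> nat \<Rightarrow> ('n \<Rightarrow> nat)" where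
  "mv f i j a = f(i := f i + a, j := f j - a)"

definition stepf :: "nat \<Rightarrow> ('n \<Rightarrow> nat) \<Rightarrow> ('n \<Rightarrow> nat) \<Rightarrow> bool" where
  "stepf p f g \<longleftrightarrow> (\<exists>i j k. i \<noteq> j \<and> digit p (f j) k \<ge> 1 \<and> g = mv f i j (p ^ k))"

definition vanish :: "nat \<Rightarrow> nat \<Rightarrow> ('n \<Rightarrow> nat) \<Rightarrow> bool" where
  "vanish p N f \<longleftrightarrow> (\<forall>i m. m \<ge> N \<longrightarrow> digit p (f i) m = 0)"

lemma sum_two:
  assumes "i \<noteq> j" "finite A" "i \<in> A" "j \<in> A"
  shows "sum h A = h i + h j + sum h (A - {i, j})"
proof -
  have "sum h A = h i + sum h (A - {i})" using assms by (simp add: sum.remove)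
  also have "sum h (A - {i}) = h j + sum h (A - {i} - {j})" using assms by (simp add: sum.remove)
  finally show ?thesis by (simp add: Diff_insert2[symmetric] insert_commute add.assoc)
qed

lemma mv_i: "i \<noteq> j \<Longrightarrow> mv f i j a i = f i + a" by (simp add: mv_def)
lemma mv_j: "i \<noteq> j \<Longrightarrow> mv f i j a j = f j - a" by (simp add: mv_def)
lemma mv_o: "r \<noteq> i \<Longrightarrow> r \<noteq> j \<Longrightarrow> mv f i j a r = f r" by (simp add: mv_def)

lemma colsum_mv:
  fixes f :: "'n::finite \<Rightarrow> nat"
  assumes "i \<noteq> j"
  shows "colsum p (mv f i j a) m = digit p (f i + a) m + digit p (f j - a) m + (\<Sum>r\<in>UNIV - {i,j}. digit p (f r) m)"
    "colsum p f m = digit p (f i) m + digit p (f j) m + (\<Sum>r\<in>UNIV - {i,j}. digit p (f r) m)"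
  unfolding colsum_def using assms
  by (subst sum_two[of i j], auto simp: mv_i mv_j mv_o intro!: sum.cong)+

lemma sum_mv:
  fixes f :: "'n::finite \<Rightarrow> nat"
  assumes "i \<noteq> j" "a \<le> f j"
  shows "sum (mv f i j a) UNIV = sum f UNIV"
proof -
  have "sum (mv f i j a) UNIV = (f i + a) + (f j - a) + (\<Sum>r\<in>UNIV - {i,j}. f r)"
    using assms by (subst sum_two[of i j]) (auto simp: mv_i mv_j mv_o intro!: sum.cong)
  moreover have "sum f UNIV = f i + f j + (\<Sum>r\<in>UNIV - {i,j}. f r)"
    using assms by (subst sum_two[of i j]) auto
  ultimately show ?thesis using assms by simp
qed

lemma Sm_0 [simp]: "Sm p f 0 = 0" by (simp add: Sm_def)

lemma Sm_Suc:
  assumes "p > 0"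
  shows "Sm p f (Suc l) = Sm p f l + colsum p f l * p ^ l"
proof -
  have "x mod p ^ Suc l = x mod p ^ l + digit p x l * p ^ l" for x
    using mod_pow_digits[OF assms, of x "Suc l"] mod_pow_digits[OF assms, of x l] by simp
  then show ?thesis by (simp add: Sm_def colsum_def sum.distrib sum_distrib_right)
qed

lemma colsum_le:
  fixes f :: "'n::finite \<Rightarrow> nat"
  assumes "p > 0" shows "colsum p f k \<le> card (UNIV :: 'n set) * (p - 1)"
proof -
  have "colsum p f k \<le> of_nat (card (UNIV::'n set)) * (p - 1)"
    unfolding colsum_def using digit_lt[OF assms]
    by (intro sum_bounded_above) (metis Suc_pred' assms less_Suc_eq_le)
  then show ?thesis by simp
qed

lemma gap:
  assumes "(a::nat) < b" "a mod m = b mod m"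
  shows "a + m \<le> b"
proof -
  have "m dvd b - a" using assms mod_eq_dvd_iff_nat[of a b m] by (simp add: less_imp_le)
  moreover have "b - a > 0" using assms by simp
  ultimately have "m \<le> b - a" by (simp add: dvd_imp_le)
  then show ?thesis using assms by simp
qed

lemma Sm_mod: "Sm p f l mod p ^ l = sum f UNIV mod p ^ l"
  unfolding Sm_def by (rule mod_sum_eq)

lemma vanish_lt:
  assumes "p > 1" "vanish p N f" shows "f i < p ^ N"
proof -
  have "f i div p ^ N = 0"
  proof (rule digits_eq_imp_eq[OF assms(1)])
    fix j
    have "f i div p ^ N div p ^ j = f i div p ^ (N + j)" by (simp add: div_mult2_eq power_add)
    then show "digit p (f i div p ^ N) j = digit p 0 j"
      using assms by (simp add: vanish_def digit_def)
  qed
  then show ?thesis using assms by (simp add: div_eq_0_iff)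
qed

lemma Sm_big:
  assumes "p > 1" "vanish p N f" "l \<ge> N"
  shows "Sm p f l = sum f UNIV"
proof -
  have "f i < p ^ l" for i
    using vanish_lt[OF assms(1,2), of i] assms power_increasing[of N l p] by (meson less_le_trans less_imp_le)
  then show ?thesis by (simp add: Sm_def)
qed


lemma digit_mv_plain:
  fixes f :: "'n \<Rightarrow> nat"
  assumes "i \<noteq> j" "p > 0" "digit p (f j) k \<ge> 1" "digit p (f i) k + 1 < p"
  shows "digit p (mv f i j (p ^ k) r) m =
    (if r = i \<and> m = k then digit p (f r) m + 1 else if r = j \<and> m = k then digit p (f r) m - 1 else digit p (f r) m)"
  using assms digit_plus_pow[OF assms(2,4)] digit_minus_pow(2)[OF assms(2,3)]
  by (cases "r = i"; cases "r = j") (auto simp: mv_i mv_j mv_o)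

lemma digit_mv_carry:
  fixes f :: "'n \<Rightarrow> nat"
  assumes "i \<noteq> j" "p > 0" "digit p (f j) k \<ge> 1" "digit p (f i) k = p - 1" "digit p (f i) (Suc k) + 1 < p"
  shows "digit p (mv f i j (p ^ k) r) m =
    (if r = i then (if m = k then 0 else if m = Suc k then digit p (f i) m + 1 else digit p (f i) m)
     else if r = j \<and> m = k then digit p (f r) m - 1 else digit p (f r) m)"
  using assms digit_carry_pow[OF assms(2,4,5)] digit_minus_pow(2)[OF assms(2,3)]
  by (cases "r = i"; cases "r = j") (auto simp: mv_i mv_j mv_o)

lemma colsum_mv_plain:
  fixes f :: "'n::finite \<Rightarrow> nat"
  assumes "i \<noteq> j" "p > 0" "digit p (f j) k \<ge> 1" "digit p (f i) k + 1 < p"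
  shows "colsum p (mv f i j (p ^ k)) m = colsum p f m"
proof -
  have a: "digit p (f i + p ^ k) m = digit p (f i) m + (if m = k then 1 else 0)"
    using digit_plus_pow[OF assms(2,4)] by blast
  have b: "digit p (f j - p ^ k) m = digit p (f j) m - (if m = k then 1 else 0)"
    using digit_minus_pow(2)[OF assms(2,3)] by blast
  have e1: "colsum p (mv f i j (p ^ k)) m = digit p (f i + p ^ k) m + digit p (f j - p ^ k) m + (\<Sum>r\<in>UNIV - {i,j}. digit p (f r) m)"
    by (rule colsum_mv(1)[OF assms(1)])
  have e2: "colsum p f m = digit p (f i) m + digit p (f j) m + (\<Sum>r\<in>UNIV - {i,j}. digit p (f r) m)"
    by (rule colsum_mv(2)[OF assms(1)])
  show ?thesis unfolding e1 e2 a b using assms(3) by auto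
qed

lemma colsum_mv_carry:
  fixes f :: "'n::finite \<Rightarrow> nat"
  assumes "i \<noteq> j" "p > 0" "digit p (f j) k \<ge> 1" "digit p (f i) k = p - 1" "digit p (f i) (Suc k) + 1 < p"
  shows "colsum p (mv f i j (p ^ k)) k + p = colsum p f k"
    "colsum p (mv f i j (p ^ k)) (Suc k) = colsum p f (Suc k) + 1"
    "m \<noteq> k \<Longrightarrow> m \<noteq> Suc k \<Longrightarrow> colsum p (mv f i j (p ^ k)) m = colsum p f m"
proof -
  have a: "digit p (f i + p ^ k) m = (if m = k then 0 else if m = Suc k then digit p (f i) m + 1 else digit p (f i) m)" for m
    using digit_carry_pow[OF assms(2,4,5)] by blast
  have b: "digit p (f j - p ^ k) m = digit p (f j) m - (if m = k then 1 else 0)" for m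
    using digit_minus_pow(2)[OF assms(2,3)] by blast
  have e1: "colsum p (mv f i j (p ^ k)) m = digit p (f i + p ^ k) m + digit p (f j - p ^ k) m + (\<Sum>r\<in>UNIV - {i,j}. digit p (f r) m)" for m
    by (rule colsum_mv(1)[OF assms(1)])
  have e2: "colsum p f m = digit p (f i) m + digit p (f j) m + (\<Sum>r\<in>UNIV - {i,j}. digit p (f r) m)" for m
    by (rule colsum_mv(2)[OF assms(1)])
  show "colsum p (mv f i j (p ^ k)) k + p = colsum p f k"
    unfolding e1 e2 a b using assms by auto
  show "colsum p (mv f i j (p ^ k)) (Suc k) = colsum p f (Suc k) + 1"
    unfolding e1 e2 a b using assms by auto
  show "m \<noteq> k \<Longrightarrow> m \<noteq> Suc k \<Longrightarrow> colsum p (mv f i j (p ^ k)) m = colsum p f m"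
    unfolding e1 e2 a b using assms by auto
qed

lemma stepfI: "i \<noteq> j \<Longrightarrow> digit p (f j) k \<ge> 1 \<Longrightarrow> stepf p f (mv f i j (p ^ k))"
  unfolding stepf_def by blast

lemma sum_eq_pointwise:
  fixes a b :: "'i \<Rightarrow> nat"
  assumes "finite A" "\<forall>x\<in>A. a x \<le> b x" "sum a A = sum b A" "x \<in> A"
  shows "a x = b x"
proof (rule ccontr)
  assume "a x \<noteq> b x"
  then have "sum a A < sum b A" using assms
    by (intro sum_strict_mono_ex1) (auto intro!: bexI[of _ x] simp: order.strict_iff_order)
  then show False using assms by simp
qed

lemma exists_other:
  fixes f :: "'n::finite \<Rightarrow> nat"
  assumes "colsum p f k > digit p (f i) k"
  shows "\<exists>j. j \<noteq> i \<and> digit p (f j) k \<ge> 1"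
proof (rule ccontr)
  assume "\<not> ?thesis"
  then have "\<forall>j\<in>UNIV - {i}. digit p (f j) k = 0" by auto
  then have "colsum p f k = digit p (f i) k"
    unfolding colsum_def by (subst sum.remove[of _ i]) auto
  then show False using assms by simp
qed

lemma reach_same:
  fixes f f' :: "'n::finite \<Rightarrow> nat"
  assumes p: "p > 1" and vf: "vanish p N f" and vf': "vanish p N f'"
    and cs: "\<forall>k. colsum p f k = colsum p f' k"
  shows "(stepf p)\<^sup>*\<^sup>* f f'"
proof -
  define E where "E = (\<lambda>g::'n \<Rightarrow> nat. \<Sum>i\<in>UNIV. \<Sum>k<N. digit p (g i) k - digit p (f' i) k)"
  show ?thesis using vf cs
  proof (induction "E f" arbitrary: f rule: less_induct)
    case less
    show ?case
    proof (cases "\<exists>j k. k < N \<and> digit p (f j) k > digit p (f' j) k")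
      case False
      have "f i = f' i" for i
      proof (rule digits_eq_imp_eq[OF p])
        fix m
        show "digit p (f i) m = digit p (f' i) m"
        proof (cases "m < N")
          case True
          have "\<forall>j\<in>UNIV. digit p (f j) m \<le> digit p (f' j) m"
          proof
            fix j
            have "\<not> (m < N \<and> digit p (f j) m > digit p (f' j) m)" using False by blast
            then show "digit p (f j) m \<le> digit p (f' j) m" using True by simp
          qed
          moreover have "sum (\<lambda>j. digit p (f j) m) UNIV = sum (\<lambda>j. digit p (f' j) m) UNIV"
            using less.prems by (simp add: colsum_def)
          ultimately show ?thesis
            using sum_eq_pointwise[of UNIV "\<lambda>j. digit p (f j) m" "\<lambda>j. digit p (f' j) m" i] by simp
        next
          case False
          then show ?thesis using less.prems vf' by (simp add: vanish_def)
        qed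
      qed
      then have "f = f'" by auto
      then show ?thesis by simp
    next
      case True
      then obtain j k where jk: "k < N" "digit p (f j) k > digit p (f' j) k" by blast
      have "\<exists>i. digit p (f i) k < digit p (f' i) k"
      proof (rule ccontr)
        assume "\<not> ?thesis"
        then have "\<forall>i\<in>UNIV. digit p (f' i) k \<le> digit p (f i) k" by (auto simp: not_less)
        then have "sum (\<lambda>i. digit p (f' i) k) UNIV < sum (\<lambda>i. digit p (f i) k) UNIV"
          using jk by (intro sum_strict_mono_ex1) auto
        then show False using less.prems by (simp add: colsum_def)
      qed
      then obtain i where i: "digit p (f i) k < digit p (f' i) k" by blast
      have ij: "i \<noteq> j" using i jk by auto
      have p0: "p > 0" using p by simp
      have dj: "digit p (f j) k \<ge> 1" using jk by simp
      have di: "digit p (f i) k + 1 < p" using i digit_lt[OF p0, of "f' i" k] by simp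
      define g where "g = mv f i j (p ^ k)"
      have dgi: "digit p (g i) m = digit p (f i) m + (if m = k then 1 else 0)" for m
        unfolding g_def mv_i[OF ij] using digit_plus_pow[OF p0 di] by blast
      have dgj: "digit p (g j) m = digit p (f j) m - (if m = k then 1 else 0)" for m
        unfolding g_def mv_j[OF ij] using digit_minus_pow(2)[OF p0 dj] by blast
      have dgo: "r \<noteq> i \<Longrightarrow> r \<noteq> j \<Longrightarrow> g r = f r" for r
        unfolding g_def by (rule mv_o)
      have st: "stepf p f g" unfolding g_def using ij dj by (rule stepfI)
      have csg: "\<forall>m. colsum p g m = colsum p f' m"
        using colsum_mv_plain[OF ij p0 dj di] less.prems(2) unfolding g_def by simp
      have vg: "vanish p N g" unfolding vanish_def
      proof (intro allI impI)
        fix r m assume m: "N \<le> m"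
        then have mk: "m \<noteq> k" using jk by simp
        show "digit p (g r) m = 0"
        proof (cases "r = i \<or> r = j")
          case True
          then show ?thesis using dgi[of m] dgj[of m] mk less.prems(1) m unfolding vanish_def by auto
        next
          case False
          then show ?thesis using dgo[of r] less.prems(1) m unfolding vanish_def by auto
        qed
      qed
      have rowle: "digit p (g r) m - digit p (f' r) m \<le> digit p (f r) m - digit p (f' r) m" for r m
      proof (cases "r = i")
        case True
        then show ?thesis using dgi[of m] i by auto
      next
        case False
        show ?thesis
        proof (cases "r = j")
          case True
          then show ?thesis using dgj[of m] by auto
        next
          case False
          then show ?thesis using dgo[of r] \<open>r \<noteq> i\<close> by simp
        qed
      qed
      have "E g < E f"
        unfolding E_def
      proof (rule sum_strict_mono_ex1)
        show "\<forall>r\<in>UNIV. (\<Sum>m<N. digit p (g r) m - digit p (f' r) m) \<le> (\<Sum>m<N. digit p (f r) m - digit p (f' r) m)"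
          using rowle by (blast intro: sum_mono)
        show "\<exists>r\<in>UNIV. (\<Sum>m<N. digit p (g r) m - digit p (f' r) m) < (\<Sum>m<N. digit p (f r) m - digit p (f' r) m)"
        proof (intro bexI[of _ j] sum_strict_mono_ex1)
          show "\<forall>m\<in>{..<N}. digit p (g j) m - digit p (f' j) m \<le> digit p (f j) m - digit p (f' j) m"
            using rowle by blast
          show "\<exists>m\<in>{..<N}. digit p (g j) m - digit p (f' j) m < digit p (f j) m - digit p (f' j) m"
            using jk dgj[of k] by (intro bexI[of _ k]) auto
        qed auto
      qed auto
      then have "(stepf p)\<^sup>*\<^sup>* g f'" using less.hyps vg csg by blast
      then show ?thesis using st by (meson converse_rtranclp_into_rtranclp)
    qed
  qed
qed


lemma vanish_mv:
  fixes f :: "'n \<Rightarrow> nat"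
  assumes "vanish p N f" "\<And>m. m \<ge> N \<Longrightarrow> digit p (mv f i j a i) m = digit p (f i) m"
    "\<And>m. m \<ge> N \<Longrightarrow> digit p (mv f i j a j) m = digit p (f j) m"
  shows "vanish p N (mv f i j a)"
  unfolding vanish_def
proof (intro allI impI)
  fix r m assume m: "N \<le> m"
  show "digit p (mv f i j a r) m = 0"
  proof (cases "r = i \<or> r = j")
    case True
    then show ?thesis using assms m unfolding vanish_def by auto
  next
    case False
    then have "mv f i j a r = f r" by (simp add: mv_def)
    then show ?thesis using assms m unfolding vanish_def by auto
  qed
qed

lemma pump:
  fixes f :: "'n::finite \<Rightarrow> nat"
  assumes p: "p > 1" and v: "vanish p N f" and kN: "k < N" and cs: "colsum p f k \<ge> p"
  shows "\<exists>g. (stepf p)\<^sup>*\<^sup>* f g \<and> (\<forall>m. colsum p g m = colsum p f m) \<and> digit p (g i) k = p - 1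
     \<and> (\<forall>m. m \<noteq> k \<longrightarrow> digit p (g i) m = digit p (f i) m) \<and> vanish p N g \<and> sum g UNIV = sum f UNIV"
  using v cs
proof (induction "p - 1 - digit p (f i) k" arbitrary: f rule: less_induct)
  case less
  have p0: "p > 0" using p by simp
  show ?case
  proof (cases "digit p (f i) k = p - 1")
    case True
    then show ?thesis using less.prems by blast
  next
    case False
    then have di: "digit p (f i) k + 1 < p" using digit_lt[OF p0, of "f i" k] by simp
    have "colsum p f k > digit p (f i) k" using less.prems(2) digit_lt[OF p0, of "f i" k] by simp
    then obtain j where ij: "j \<noteq> i" and dj: "digit p (f j) k \<ge> 1" using exists_other by blast
    define g where "g = mv f i j (p ^ k)"
    have ij': "i \<noteq> j" using ij by simp
    have dgi: "digit p (g i) m = digit p (f i) m + (if m = k then 1 else 0)" for m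
      unfolding g_def mv_i[OF ij'] using digit_plus_pow[OF p0 di] by blast
    have dgj: "digit p (g j) m = digit p (f j) m - (if m = k then 1 else 0)" for m
      unfolding g_def mv_j[OF ij'] using digit_minus_pow(2)[OF p0 dj] by blast
    have st: "stepf p f g" unfolding g_def using ij' dj by (rule stepfI)
    have csg: "\<forall>m. colsum p g m = colsum p f m"
      using colsum_mv_plain[OF ij' p0 dj di] unfolding g_def by simp
    have vg: "vanish p N g" unfolding g_def
      by (rule vanish_mv[OF less.prems(1)]) (use dgi dgj kN in \<open>auto simp: g_def\<close>)
    have sg: "sum g UNIV = sum f UNIV" unfolding g_def
      using sum_mv[OF ij'] digit_minus_pow(1)[OF p0 dj] by blast
    have lt: "p - 1 - digit p (g i) k < p - 1 - digit p (f i) k" using dgi[of k] di by simp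
    obtain h where h: "(stepf p)\<^sup>*\<^sup>* g h" "\<forall>m. colsum p h m = colsum p g m" "digit p (h i) k = p - 1"
      "\<forall>m. m \<noteq> k \<longrightarrow> digit p (h i) m = digit p (g i) m" "vanish p N h" "sum h UNIV = sum g UNIV"
      using less.hyps[OF lt vg] csg less.prems(2) by auto
    show ?thesis
      apply (rule exI[of _ h])
      using h csg dgi sg st by (auto intro: converse_rtranclp_into_rtranclp)
  qed
qed

lemma Sm_carry:
  fixes f g :: "'n::finite \<Rightarrow> nat"
  assumes p0: "p > 0" and c1: "colsum p g k + p = colsum p f k"
    and c2: "colsum p g (Suc k) = colsum p f (Suc k) + 1"
    and c3: "\<And>m. m \<noteq> k \<Longrightarrow> m \<noteq> Suc k \<Longrightarrow> colsum p g m = colsum p f m"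
  shows "Sm p g l + (if l = Suc k then p ^ Suc k else 0) = Sm p f l"
proof (induction l)
  case 0 then show ?case by simp
next
  case (Suc l)
  have eg: "Sm p g (Suc l) = Sm p g l + colsum p g l * p ^ l" by (rule Sm_Suc[OF p0])
  have ef: "Sm p f (Suc l) = Sm p f l + colsum p f l * p ^ l" by (rule Sm_Suc[OF p0])
  consider "l = k" | "l = Suc k" | "l \<noteq> k" "l \<noteq> Suc k" by blast
  then show ?case
  proof cases
    case 1
    have "colsum p f l * p ^ l = colsum p g l * p ^ l + p ^ Suc k"
      using c1 1 by (simp add: algebra_simps flip: c1)
    then show ?thesis using Suc.IH eg ef 1 by simp
  next
    case 2
    have "colsum p g l * p ^ l = colsum p f l * p ^ l + p ^ Suc k" using c2 2 by (simp add: algebra_simps)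
    then show ?thesis using Suc.IH eg ef 2 by simp
  next
    case 3
    then show ?thesis using Suc.IH eg ef c3[OF 3] by simp
  qed
qed

lemma carry_step:
  fixes f :: "'n::finite \<Rightarrow> nat"
  assumes p: "p > 1" and v: "vanish p N f" and kN: "Suc k < N" and cs: "colsum p f k \<ge> p"
    and cs2: "colsum p f (Suc k) < card (UNIV :: 'n set) * (p - 1)"
  shows "\<exists>g. (stepf p)\<^sup>*\<^sup>* f g \<and> vanish p N g \<and> sum g UNIV = sum f UNIV \<and>
     (\<forall>l. Sm p g l + (if l = Suc k then p ^ Suc k else 0) = Sm p f l)"
proof -
  have p0: "p > 0" using p by simp
  have "\<exists>i. digit p (f i) (Suc k) + 1 < p"
  proof (rule ccontr)
    assume na: "\<not> (\<exists>i. digit p (f i) (Suc k) + 1 < p)"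
    have "\<forall>i\<in>UNIV. digit p (f i) (Suc k) = p - 1"
    proof
      fix i
      have "\<not> digit p (f i) (Suc k) + 1 < p" using na by blast
      then show "digit p (f i) (Suc k) = p - 1" using digit_lt[OF p0, of "f i" "Suc k"] by linarith
    qed
    then have "colsum p f (Suc k) = card (UNIV :: 'n set) * (p - 1)" unfolding colsum_def by simp
    then show False using cs2 by simp
  qed
  then obtain i where di1: "digit p (f i) (Suc k) + 1 < p" by blast
  obtain g0 where g0: "(stepf p)\<^sup>*\<^sup>* f g0" "\<forall>m. colsum p g0 m = colsum p f m" "digit p (g0 i) k = p - 1"
     "\<forall>m. m \<noteq> k \<longrightarrow> digit p (g0 i) m = digit p (f i) m" "vanish p N g0" "sum g0 UNIV = sum f UNIV"
    using pump[OF p v _ cs, of i] kN by auto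
  have di1': "digit p (g0 i) (Suc k) + 1 < p" using g0(4) di1 by simp
  have "colsum p g0 k > digit p (g0 i) k" using g0(2,3) cs p by simp
  then obtain j where ij: "j \<noteq> i" and dj: "digit p (g0 j) k \<ge> 1" using exists_other by blast
  have ij': "i \<noteq> j" using ij by simp
  define g where "g = mv g0 i j (p ^ k)"
  have dgi: "digit p (g i) m = (if m = k then 0 else if m = Suc k then digit p (g0 i) m + 1 else digit p (g0 i) m)" for m
    unfolding g_def mv_i[OF ij'] using digit_carry_pow[OF p0 g0(3) di1'] by blast
  have dgj: "digit p (g j) m = digit p (g0 j) m - (if m = k then 1 else 0)" for m
    unfolding g_def mv_j[OF ij'] using digit_minus_pow(2)[OF p0 dj] by blast
  have st: "stepf p g0 g" unfolding g_def using ij' dj by (rule stepfI)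
  note cc = colsum_mv_carry[OF ij' p0 dj g0(3) di1', folded g_def]
  have vg: "vanish p N g" unfolding g_def
    by (rule vanish_mv[OF g0(5)]) (use dgi dgj kN in \<open>auto simp: g_def\<close>)
  have sg: "sum g UNIV = sum f UNIV" unfolding g_def
    using sum_mv[OF ij'] digit_minus_pow(1)[OF p0 dj] g0(6) by metis
  have sm: "Sm p g l + (if l = Suc k then p ^ Suc k else 0) = Sm p f l" for l
  proof (rule Sm_carry[OF p0])
    show "colsum p g k + p = colsum p f k" using cc(1) g0(2) by simp
    show "colsum p g (Suc k) = colsum p f (Suc k) + 1" using cc(2) g0(2) by simp
    show "m \<noteq> k \<Longrightarrow> m \<noteq> Suc k \<Longrightarrow> colsum p g m = colsum p f m" for m using cc(3) g0(2) by simp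
  qed
  show ?thesis
    using g0(1) st vg sg sm by (meson rtranclp.rtrancl_into_rtrancl)
qed


lemma Sm_lt_N:
  fixes f f' :: "'n::finite \<Rightarrow> nat"
  assumes p: "p > 1" and v: "vanish p N f" and v': "vanish p N f'" and s: "sum f UNIV = sum f' UNIV"
    and lt: "Sm p f' l < Sm p f l"
  shows "l < N"
proof (rule ccontr)
  assume "\<not> l < N"
  then have "Sm p f' l = Sm p f l" using Sm_big[OF p v] Sm_big[OF p v'] s by simp
  then show False using lt by simp
qed

lemma walk:
  fixes f f' :: "'n::finite \<Rightarrow> nat"
  assumes p: "p > 1" and v: "vanish p N f" and v': "vanish p N f'" and s: "sum f UNIV = sum f' UNIV"
  shows "Sm p f' (Suc k) < Sm p f (Suc k) \<Longrightarrow> colsum p f k \<ge> p \<Longrightarrow>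
    \<exists>k'. Sm p f' (Suc k') < Sm p f (Suc k') \<and> colsum p f k' \<ge> p \<and>
         colsum p f (Suc k') < card (UNIV :: 'n set) * (p - 1) \<and> Suc k' < N"
proof (induction "N - k" arbitrary: k rule: less_induct)
  case less
  have p0: "p > 0" using p by simp
  have kN: "Suc k < N" using Sm_lt_N[OF p v v' s less.prems(1)] .
  show ?case
  proof (cases "colsum p f (Suc k) < card (UNIV :: 'n set) * (p - 1)")
    case True
    then show ?thesis using less.prems kN by blast
  next
    case False
    define n where "n = card (UNIV :: 'n set) * (p - 1)"
    have eq: "colsum p f (Suc k) = n" using False colsum_le[OF p0, of f "Suc k"] n_def by simp
    have "colsum p f k \<le> n" using colsum_le[OF p0] n_def by blast
    then have ge: "colsum p f (Suc k) \<ge> p" using eq less.prems(2) by simp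
    have "colsum p f' (Suc k) \<le> n" using colsum_le[OF p0] n_def by blast
    then have "colsum p f' (Suc k) * p ^ Suc k \<le> colsum p f (Suc k) * p ^ Suc k" using eq by simp
    then have "Sm p f' (Suc (Suc k)) < Sm p f (Suc (Suc k))"
      using Sm_Suc[OF p0, of f' "Suc k"] Sm_Suc[OF p0, of f "Suc k"] less.prems(1) by linarith
    moreover have "N - Suc k < N - k" using kN by simp
    ultimately show ?thesis using less.hyps ge by blast
  qed
qed

lemma reach_main:
  fixes f f' :: "'n::finite \<Rightarrow> nat"
  assumes p: "p > 1" and v': "vanish p N f'"
  shows "vanish p N f \<Longrightarrow> sum f UNIV = sum f' UNIV \<Longrightarrow> (\<forall>l. Sm p f' l \<le> Sm p f l) \<Longrightarrow> (stepf p)\<^sup>*\<^sup>* f f'"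
proof (induction "\<Sum>l<N. Sm p f l" arbitrary: f rule: less_induct)
  case less
  have p0: "p > 0" using p by simp
  show ?case
  proof (cases "\<exists>l. Sm p f' l < Sm p f l")
    case False
    then have eq: "Sm p f' l = Sm p f l" for l using less.prems(3) by (meson le_neq_implies_less)
    have "colsum p f k = colsum p f' k" for k
    proof -
      have "colsum p f k * p ^ k = colsum p f' k * p ^ k"
        using Sm_Suc[OF p0, of f k] Sm_Suc[OF p0, of f' k] eq[of k] eq[of "Suc k"] by simp
      then show ?thesis using p0 by simp
    qed
    then show ?thesis using reach_same[OF p less.prems(1) v'] by simp
  next
    case True
    define l0 where "l0 = (LEAST l. Sm p f' l < Sm p f l)"
    have l0: "Sm p f' l0 < Sm p f l0" using True l0_def by (metis LeastI)
    have "l0 \<noteq> 0" using l0 by (metis Sm_0 less_irrefl)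
    then obtain k0 where k0: "l0 = Suc k0" by (metis not0_implies_Suc)
    have "k0 < (LEAST l. Sm p f' l < Sm p f l)" using k0 l0_def by simp
    then have "\<not> Sm p f' k0 < Sm p f k0" by (rule not_less_Least)
    then have ek: "Sm p f' k0 = Sm p f k0" using less.prems(3) by (meson le_neq_implies_less)
    have gap0: "Sm p f' l0 + p ^ l0 \<le> Sm p f l0"
      using gap[OF l0] Sm_mod[of p f' l0] Sm_mod[of p f l0] less.prems(2) by simp
    then have "colsum p f' k0 * p ^ k0 + p * p ^ k0 \<le> colsum p f k0 * p ^ k0"
      using Sm_Suc[OF p0, of f k0] Sm_Suc[OF p0, of f' k0] ek k0 by simp
    then have "(colsum p f' k0 + p) * p ^ k0 \<le> colsum p f k0 * p ^ k0" by (simp add: algebra_simps)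
    then have ck0: "colsum p f k0 \<ge> p" using p0 by (metis le_add2 le_trans mult_le_cancel2 zero_less_power)
    obtain k' where k': "Sm p f' (Suc k') < Sm p f (Suc k')" "colsum p f k' \<ge> p"
      "colsum p f (Suc k') < card (UNIV :: 'n set) * (p - 1)" "Suc k' < N"
      using walk[OF p less.prems(1) v' less.prems(2)] l0 k0 ck0 by blast
    obtain g where g: "(stepf p)\<^sup>*\<^sup>* f g" "vanish p N g" "sum g UNIV = sum f UNIV"
      "\<forall>l. Sm p g l + (if l = Suc k' then p ^ Suc k' else 0) = Sm p f l"
      using carry_step[OF p less.prems(1) k'(4) k'(2) k'(3)] by blast
    have gle: "Sm p g l \<le> Sm p f l" for l using g(4) by (metis le_add1)
    have "(\<Sum>l<N. Sm p g l) < (\<Sum>l<N. Sm p f l)"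
    proof (rule sum_strict_mono_ex1)
      show "\<forall>l\<in>{..<N}. Sm p g l \<le> Sm p f l" using gle by blast
      show "\<exists>l\<in>{..<N}. Sm p g l < Sm p f l"
      proof (intro bexI[of _ "Suc k'"])
        have "Sm p g (Suc k') + p ^ Suc k' = Sm p f (Suc k')" using g(4) by (metis (full_types))
        then show "Sm p g (Suc k') < Sm p f (Suc k')" using p0 by (metis less_add_same_cancel1 zero_less_power)
      qed (use k'(4) in simp)
    qed auto
    moreover have "\<forall>l. Sm p f' l \<le> Sm p g l"
    proof
      fix l
      show "Sm p f' l \<le> Sm p g l"
      proof (cases "l = Suc k'")
        case True
        have "Sm p f' l + p ^ l \<le> Sm p f l"
          using gap[of "Sm p f' l" "Sm p f l" "p ^ l"] k'(1) True Sm_mod[of p f' l] Sm_mod[of p f l] less.prems(2) by simp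
        then show ?thesis using g(4) True by (metis add_le_cancel_right)
      next
        case False
        then show ?thesis using g(4) less.prems(3) by (metis add_0_right)
      qed
    qed
    ultimately have "(stepf p)\<^sup>*\<^sup>* g f'" using less.hyps g(2,3) less.prems(2) by simp
    then show ?thesis using g(1) by (meson rtranclp_trans)
  qed
qed


lemma num_lt_from_digits:
  assumes p: "p > 1" and z: "\<And>m. m \<ge> N \<Longrightarrow> digit p x m = 0" shows "x < p ^ N"
proof -
  have "x div p ^ N = 0"
  proof (rule digits_eq_imp_eq[OF p])
    fix j
    have "x div p ^ N div p ^ j = x div p ^ (N + j)" by (simp add: div_mult2_eq power_add)
    then show "digit p (x div p ^ N) j = digit p 0 j" using z by (simp add: digit_def)
  qed
  then show ?thesis using p by (simp add: div_eq_0_iff)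
qed

lemma digit_zero_big: "p > 1 \<Longrightarrow> x < p ^ N \<Longrightarrow> m \<ge> N \<Longrightarrow> digit p x m = 0"
  unfolding digit_def
  by (metis div_less less_le_trans mod_0 power_increasing_iff  le_less)

lemma vanish_of_bound:
  fixes f :: "'n \<Rightarrow> nat"
  shows "p > 1 \<Longrightarrow> (\<And>i. f i < p ^ N) \<Longrightarrow> vanish p N f"
  unfolding vanish_def using digit_zero_big by blast

lemma topdeg_bound:
  assumes p: "p > 1" and d: "d \<ge> 1"
  shows "d < p ^ Suc (topdeg p d)"
proof -
  let ?A = "{j. digit p d j \<noteq> 0}"
  have sub: "?A \<subseteq> {..<d}"
  proof
    fix j assume "j \<in> ?A"
    then have "digit p d j \<noteq> 0" by simp
    moreover have "d < p ^ d" using n_less_pow[OF p] .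
    ultimately show "j \<in> {..<d}" using digit_zero_big[OF p, of d d j] by (cases "j < d") auto
  qed
  then have fin: "finite ?A" by (rule finite_subset) simp
  have "?A \<noteq> {}"
  proof
    assume "?A = {}"
    then have "d = 0" using digits_eq_imp_eq[OF p, of d 0] by (auto simp: digit_def)
    then show False using d by simp
  qed
  have "digit p d m = 0" if "m \<ge> Suc (topdeg p d)" for m
  proof (rule ccontr)
    assume "digit p d m \<noteq> 0"
    then have "m \<le> topdeg p d" unfolding topdeg_def using fin by (simp add: Max_ge)
    then show False using that by simp
  qed
  then show ?thesis using num_lt_from_digits[OF p] by blast
qed

lemma carry_Sm:
  fixes b :: "'n::finite \<Rightarrow>\<^sub>0 nat"
  assumes p: "p > 1"
  shows "carry p b l = (if mdeg b \<ge> 1 \<and> 1 \<le> l \<and> l \<le> topdeg p (mdeg b) then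
            Sm p (Poly_Mapping.lookup b) l div p ^ l else 0)"
proof -
  have p0: "p > 0" using p by simp
  have e1: "(\<Sum>i\<in>UNIV. \<Sum>j<l. digit p (Poly_Mapping.lookup b i) j * p ^ j) = Sm p (Poly_Mapping.lookup b) l"
    unfolding Sm_def using mod_pow_digits[OF p0] by simp
  have e2: "(\<Sum>j<l. digit p (mdeg b) j * p ^ j) = mdeg b mod p ^ l"
    using mod_pow_digits[OF p0] by simp
  have e3: "Sm p (Poly_Mapping.lookup b) l mod p ^ l = mdeg b mod p ^ l"
    using Sm_mod[of p "Poly_Mapping.lookup b" l] by (simp add: mdeg_def)
  have "(Sm p (Poly_Mapping.lookup b) l - mdeg b mod p ^ l) div p ^ l = Sm p (Poly_Mapping.lookup b) l div p ^ l"
    by (metis e3 minus_mod_eq_mult_div nonzero_mult_div_cancel_left p0 power_not_zero neq0_conv)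
  then show ?thesis unfolding carry_def Let_def e1 e2 by simp
qed

lemma Sm_decomp:
  fixes b :: "'n::finite \<Rightarrow>\<^sub>0 nat"
  shows "Sm p (Poly_Mapping.lookup b) l = mdeg b mod p ^ l + p ^ l * (Sm p (Poly_Mapping.lookup b) l div p ^ l)"
proof -
  have "Sm p (Poly_Mapping.lookup b) l mod p ^ l = mdeg b mod p ^ l"
    using Sm_mod[of p "Poly_Mapping.lookup b" l] by (simp add: mdeg_def)
  then show ?thesis by (metis mod_mult_div_eq)
qed

lemma lookup_le_mdeg:
  fixes b :: "'n::finite \<Rightarrow>\<^sub>0 nat"
  shows "Poly_Mapping.lookup b i \<le> mdeg b"
  unfolding mdeg_def by (rule member_le_sum) auto

lemma Sm_out_of_range:
  fixes b :: "'n::finite \<Rightarrow>\<^sub>0 nat"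
  assumes p: "p > 1" and "\<not> (mdeg b \<ge> 1 \<and> 1 \<le> l \<and> l \<le> topdeg p (mdeg b))"
  shows "Sm p (Poly_Mapping.lookup b) l = (if l = 0 then 0 else mdeg b)"
proof (cases "l = 0")
  case True then show ?thesis by simp
next
  case False
  show ?thesis
  proof (cases "mdeg b \<ge> 1")
    case True
    then have l: "l \<ge> Suc (topdeg p (mdeg b))" using assms False by auto
    have "Poly_Mapping.lookup b i < p ^ l" for i
    proof -
      have "Poly_Mapping.lookup b i < p ^ Suc (topdeg p (mdeg b))"
        using lookup_le_mdeg[of b i] topdeg_bound[OF p True] by linarith
      also have "\<dots> \<le> p ^ l" using l p by (intro power_increasing) auto
      finally show ?thesis .
    qed
    then show ?thesis using False by (simp add: Sm_def mdeg_def)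
  next
    case c: False
    then have "mdeg b = 0" by simp
    then have "Poly_Mapping.lookup b i = 0" for i using lookup_le_mdeg[of b i] by simp
    then show ?thesis using False c by (simp add: Sm_def)
  qed
qed

lemma carry_le_iff:
  fixes b b' :: "'n::finite \<Rightarrow>\<^sub>0 nat"
  assumes p: "p > 1" and d: "mdeg b' = mdeg b"
  shows "carry p b' \<le> carry p b \<longleftrightarrow> (\<forall>l. Sm p (Poly_Mapping.lookup b') l \<le> Sm p (Poly_Mapping.lookup b) l)"
proof
  assume c: "carry p b' \<le> carry p b"
  show "\<forall>l. Sm p (Poly_Mapping.lookup b') l \<le> Sm p (Poly_Mapping.lookup b) l"
  proof
    fix l
    show "Sm p (Poly_Mapping.lookup b') l \<le> Sm p (Poly_Mapping.lookup b) l"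
    proof (cases "mdeg b \<ge> 1 \<and> 1 \<le> l \<and> l \<le> topdeg p (mdeg b)")
      case True
      have "Sm p (Poly_Mapping.lookup b') l div p ^ l \<le> Sm p (Poly_Mapping.lookup b) l div p ^ l"
        using c[THEN le_funD, of l] True d by (simp add: carry_Sm[OF p])
      then have "mdeg b mod p ^ l + p ^ l * (Sm p (Poly_Mapping.lookup b') l div p ^ l) \<le> mdeg b mod p ^ l + p ^ l * (Sm p (Poly_Mapping.lookup b) l div p ^ l)"
        by simp
      then show ?thesis using Sm_decomp[of p b' l] Sm_decomp[of p b l] d by simp
    next
      case False
      then show ?thesis using Sm_out_of_range[OF p False] Sm_out_of_range[OF p, of b' l] d by simp
    qed
  qed
next
  assume s: "\<forall>l. Sm p (Poly_Mapping.lookup b') l \<le> Sm p (Poly_Mapping.lookup b) l"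
  show "carry p b' \<le> carry p b"
  proof (rule le_funI)
    fix l
    show "carry p b' l \<le> carry p b l"
      using s d by (simp add: carry_Sm[OF p] div_le_mono)
  qed
qed


abbreviation lk where "lk \<equiv> Poly_Mapping.lookup"

lemma poly_expand: "f = (\<Sum>m\<in>Poly_Mapping.keys f. Poly_Mapping.single m (lk f m))"
proof (rule poly_mapping_eqI)
  fix k
  show "lk f k = lk (\<Sum>m\<in>Poly_Mapping.keys f. Poly_Mapping.single m (lk f m)) k"
    by (simp add: lookup_sum lookup_single when_def in_keys_iff)
qed

lemma cst_0 [simp]: "cst 0 = 0" by (simp add: cst_def)
lemma cst_1 [simp]: "cst 1 = 1" by (simp add: cst_def)
lemma cst_add: "cst (a + b) = cst a + cst b" by (simp add: cst_def single_add)
lemma cst_mult: "cst a * cst b = cst (a * b)" by (simp add: cst_def mult_single)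
lemma cst_single: "cst c * Poly_Mapping.single m a = Poly_Mapping.single m (c * a)"
  by (simp add: cst_def mult_single)
lemma cst_of_nat: "cst (of_nat n) = of_nat n" by (simp add: cst_def)

definition monoL :: "('n::finite \<Rightarrow> ('n, 'k::field) mpoly) \<Rightarrow> ('n \<Rightarrow>\<^sub>0 nat) \<Rightarrow> ('n, 'k) mpoly" where
  "monoL L m = (\<Prod>i\<in>UNIV. L i ^ lk m i)"

definition ev :: "('n::finite \<Rightarrow> ('n, 'k::field) mpoly) \<Rightarrow> ('n, 'k) mpoly \<Rightarrow> ('n, 'k) mpoly" where
  "ev L f = (\<Sum>m\<in>Poly_Mapping.keys f. cst (lk f m) * monoL L m)"

definition Lg :: "('n::finite \<Rightarrow> 'n \<Rightarrow> 'k::field) \<Rightarrow> 'n \<Rightarrow> ('n, 'k) mpoly" where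
  "Lg g i = (\<Sum>k\<in>UNIV. cst (g k i) * var k)"

lemma act_ev: "act g f = ev (Lg g) f"
  unfolding act_def ev_def monoL_def Lg_def ..

lemma ev_superset:
  assumes "finite A" "Poly_Mapping.keys f \<subseteq> A"
  shows "ev L f = (\<Sum>m\<in>A. cst (lk f m) * monoL L m)"
  unfolding ev_def using assms
  by (intro sum.mono_neutral_left) (auto simp: in_keys_iff)

lemma ev_0 [simp]: "ev L 0 = 0" by (simp add: ev_def)

lemma ev_add: "ev L (f + h) = ev L f + ev L h"
proof -
  let ?A = "Poly_Mapping.keys f \<union> Poly_Mapping.keys h"
  have "ev L (f + h) = (\<Sum>m\<in>?A. cst (lk (f + h) m) * monoL L m)"
    by (rule ev_superset) (auto dest: keys_add[THEN subsetD])
  also have "\<dots> = (\<Sum>m\<in>?A. cst (lk f m) * monoL L m) + (\<Sum>m\<in>?A. cst (lk h m) * monoL L m)"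
    by (simp add: lookup_add cst_add distrib_right sum.distrib)
  also have "\<dots> = ev L f + ev L h"
    using ev_superset[of ?A f L] ev_superset[of ?A h L] by simp
  finally show ?thesis .
qed

lemma ev_single: "ev L (Poly_Mapping.single m c) = cst c * monoL L m"
  by (cases "c = 0") (simp_all add: ev_def)

lemma ev_sum: "ev L (sum F S) = (\<Sum>x\<in>S. ev L (F x))"
  by (induction S rule: infinite_finite_induct) (simp_all add: ev_add)

lemma monoL_add: "monoL L (a + b) = monoL L a * monoL L b"
  by (simp add: monoL_def lookup_add power_add prod.distrib)

lemma ev_mult: "ev L (f * h) = ev L f * ev L h"
proof -
  have ef: "f * h = (\<Sum>a\<in>Poly_Mapping.keys f. Poly_Mapping.single a (lk f a)) * (\<Sum>b\<in>Poly_Mapping.keys h. Poly_Mapping.single b (lk h b))"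
    by (simp only: poly_expand[symmetric])
  also have "\<dots> = (\<Sum>a\<in>Poly_Mapping.keys f. \<Sum>b\<in>Poly_Mapping.keys h. Poly_Mapping.single (a + b) (lk f a * lk h b))"
    by (simp add: sum_product mult_single)
  finally have "ev L (f * h) = (\<Sum>a\<in>Poly_Mapping.keys f. \<Sum>b\<in>Poly_Mapping.keys h. (cst (lk f a) * monoL L a) * (cst (lk h b) * monoL L b))"
    by (simp add: ev_sum ev_single monoL_add cst_mult[symmetric] algebra_simps)
  also have "\<dots> = ev L f * ev L h" by (simp add: ev_def sum_product)
  finally show ?thesis .
qed

lemma act_add: "act g (f + h) = act g f + act g h" by (simp add: act_ev ev_add)
lemma act_mult: "act g (f * h) = act g f * act g h" by (simp add: act_ev ev_mult)
lemma act_0: "act g 0 = 0" by (simp add: act_ev)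
lemma act_monomial: "act g (monomial_x b) = monoL (Lg g) b"
  by (simp add: act_ev monomial_x_def ev_single)

lemma is_ideal_UNIV: "is_ideal UNIV" by (simp add: is_ideal_def)

lemma ideal_gen_ideal: "is_ideal (ideal_gen G)"
  unfolding is_ideal_def ideal_gen_def by auto

lemma ideal_gen_sub: "G \<subseteq> ideal_gen G"
  unfolding ideal_gen_def by auto

lemma ideal_gen_least: "is_ideal J \<Longrightarrow> G \<subseteq> J \<Longrightarrow> ideal_gen G \<subseteq> J"
  unfolding ideal_gen_def by auto

lemma ideal_0: "is_ideal J \<Longrightarrow> 0 \<in> J" by (simp add: is_ideal_def)
lemma ideal_add: "is_ideal J \<Longrightarrow> a \<in> J \<Longrightarrow> b \<in> J \<Longrightarrow> a + b \<in> J" by (simp add: is_ideal_def)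
lemma ideal_mult: "is_ideal J \<Longrightarrow> a \<in> J \<Longrightarrow> r * a \<in> J" by (simp add: is_ideal_def)
lemma ideal_neg: "is_ideal J \<Longrightarrow> a \<in> J \<Longrightarrow> - a \<in> J"
  using ideal_mult[of J a "-1"] by simp
lemma ideal_diff: "is_ideal J \<Longrightarrow> a \<in> J \<Longrightarrow> b \<in> J \<Longrightarrow> a - b \<in> J"
  using ideal_add[of J a "- b"] ideal_neg[of J b] by simp

lemma ideal_sum: "is_ideal J \<Longrightarrow> (\<And>x. x \<in> S \<Longrightarrow> F x \<in> J) \<Longrightarrow> sum F S \<in> J"
  by (induction S rule: infinite_finite_induct) (auto simp: ideal_0 ideal_add)

lemma single_as_monomial: "Poly_Mapping.single m c = cst c * monomial_x m"
  by (simp add: monomial_x_def cst_single)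

lemma ideal_of_monomials:
  assumes "is_ideal J" "\<And>m. m \<in> Poly_Mapping.keys f \<Longrightarrow> monomial_x m \<in> J"
  shows "f \<in> J"
proof -
  have "(\<Sum>m\<in>Poly_Mapping.keys f. Poly_Mapping.single m (lk f m)) \<in> J"
    using assms by (intro ideal_sum) (auto simp: single_as_monomial ideal_mult)
  then show ?thesis by (simp only: poly_expand[symmetric])
qed

lemma preimage_ideal:
  assumes "is_ideal J" shows "is_ideal {f. act g f \<in> J}"
  using assms unfolding is_ideal_def by (auto simp: act_add act_mult act_0)


lemma mdeg_add: "mdeg (a + b) = mdeg a + mdeg b"
  by (simp add: mdeg_def lookup_add sum.distrib)

lemma mdeg_zero [simp]: "mdeg (0 :: 'n::finite \<Rightarrow>\<^sub>0 nat) = 0"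
  by (simp add: mdeg_def)

lemma mdeg_single: "mdeg (Poly_Mapping.single (k::'n::finite) (c::nat)) = c"
  by (simp add: mdeg_def lookup_single when_def)

lemma Sm_add_le:
  fixes x y :: "'n::finite \<Rightarrow>\<^sub>0 nat"
  shows "Sm p (lk (x + y)) l \<le> Sm p (lk x) l + Sm p (lk y) l"
proof -
  have "(a + b) mod q \<le> a mod q + b mod q" for a b q :: nat
    by (metis mod_add_eq mod_less_eq_dividend)
  then show ?thesis unfolding Sm_def lookup_add by (simp add: sum.distrib[symmetric] sum_mono)
qed

lemma Sm_le_mdeg:
  fixes x :: "'n::finite \<Rightarrow>\<^sub>0 nat"
  shows "Sm p (lk x) l \<le> mdeg x"
  unfolding Sm_def mdeg_def by (intro sum_mono) simp

lemma CHAR_mpoly: "CHAR(('n, 'k::field) mpoly) = CHAR('k)"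
proof (rule CHAR_eqI)
  have "(of_nat CHAR('k) :: ('n, 'k) mpoly) = Poly_Mapping.single 0 (of_nat CHAR('k))"
    by (rule single_of_nat[symmetric])
  then show "of_nat CHAR('k) = (0 :: ('n, 'k) mpoly)" by simp
  fix x assume "of_nat x = (0 :: ('n, 'k) mpoly)"
  note h = this
  have "Poly_Mapping.single (0::'n \<Rightarrow>\<^sub>0 nat) (of_nat x :: 'k) = of_nat x" by (rule single_of_nat)
  then have "Poly_Mapping.single (0::'n \<Rightarrow>\<^sub>0 nat) (of_nat x :: 'k) = 0" using h by (rule trans)
  then have "lk (Poly_Mapping.single (0::'n \<Rightarrow>\<^sub>0 nat) (of_nat x :: 'k)) 0 = 0" by simp
  then have "(of_nat x :: 'k) = 0" by (simp only: lookup_single_eq)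
  then show "CHAR('k) dvd x" by (simp add: of_nat_eq_0_iff_char_dvd)
qed

lemma keys_pow_inv:
  fixes h :: "('n, 'k::field) mpoly"
  assumes "0 \<in> P" "\<And>a b. a \<in> P \<Longrightarrow> b \<in> P \<Longrightarrow> a + b \<in> P" "Poly_Mapping.keys h \<subseteq> P"
  shows "Poly_Mapping.keys (h ^ n) \<subseteq> P"
proof (induction n)
  case 0 then show ?case using assms by simp
next
  case (Suc n)
  have "Poly_Mapping.keys (h ^ Suc n) \<subseteq> {a + b |a b. a \<in> Poly_Mapping.keys h \<and> b \<in> Poly_Mapping.keys (h ^ n)}"
    by (simp add: keys_mult)
  then show ?case using Suc assms by blast
qed

lemma keys_single_pow:
  fixes c :: "'k::field"
  shows "Poly_Mapping.keys (Poly_Mapping.single a c ^ n) \<subseteq> {b. \<forall>k. lk b k = n * lk a k}"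
proof (induction n)
  case 0 then show ?case by simp
next
  case (Suc n)
  have "Poly_Mapping.keys (Poly_Mapping.single a c ^ Suc n) \<subseteq>
     {x + y |x y. x \<in> Poly_Mapping.keys (Poly_Mapping.single a c) \<and> y \<in> Poly_Mapping.keys (Poly_Mapping.single a c ^ n)}"
    (is "_ \<subseteq> ?R") by (simp only: power_Suc keys_mult)
  then have *: "\<And>b. b \<in> Poly_Mapping.keys (Poly_Mapping.single a c ^ Suc n) \<Longrightarrow> b \<in> ?R" by blast
  show ?case
  proof
    fix b assume "b \<in> Poly_Mapping.keys (Poly_Mapping.single a c ^ Suc n)"
    then obtain x y where "b = x + y" "x \<in> Poly_Mapping.keys (Poly_Mapping.single a c)"
      "y \<in> Poly_Mapping.keys (Poly_Mapping.single a c ^ n)" using * by blast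
    moreover have "x = a" using \<open>x \<in> _\<close> by (simp split: if_splits)
    ultimately show "b \<in> {b. \<forall>k. lk b k = Suc n * lk a k}" using Suc by (auto simp: lookup_add)
  qed
qed

lemma frob_keys:
  fixes h :: "('n::finite, 'k::field) mpoly"
  assumes pr: "prime p" and ch: "CHAR('k) = p"
  shows "Poly_Mapping.keys (h ^ (p ^ l)) \<subseteq> {b. \<forall>k. p ^ l dvd lk b k}"
proof -
  have chm: "prime CHAR(('n, 'k) mpoly)" using pr ch by (simp add: CHAR_mpoly)
  have "h ^ (p ^ l) = (\<Sum>a\<in>Poly_Mapping.keys h. Poly_Mapping.single a (lk h a)) ^ (p ^ l)"
    by (simp only: poly_expand[symmetric])
  also have "\<dots> = (\<Sum>a\<in>Poly_Mapping.keys h. Poly_Mapping.single a (lk h a) ^ (p ^ l))"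
    by (rule freshmans_dream_sum'[OF chm]) (simp add: CHAR_mpoly ch)
  finally have "Poly_Mapping.keys (h ^ (p ^ l)) \<subseteq> (\<Union>a\<in>Poly_Mapping.keys h. Poly_Mapping.keys (Poly_Mapping.single a (lk h a) ^ (p ^ l)))"
    using keys_sum by metis
  also have "\<dots> \<subseteq> {b. \<forall>k. p ^ l dvd lk b k}" using keys_single_pow by fastforce
  finally show ?thesis .
qed

lemma lin_pow_keys:
  fixes h :: "('n::finite, 'k::field) mpoly"
  assumes pr: "prime p" and ch: "CHAR('k) = p" and lin: "Poly_Mapping.keys h \<subseteq> {b. mdeg b = 1}"
    and a: "a \<in> Poly_Mapping.keys (h ^ m)"
  shows "mdeg a = m" "Sm p (lk a) l \<le> m mod p ^ l"
proof -
  have deg: "Poly_Mapping.keys (h ^ n) \<subseteq> {b. mdeg b = n}" for n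
  proof (induction n)
    case 0 then show ?case by simp
  next
    case (Suc n)
    have "Poly_Mapping.keys (h ^ Suc n) \<subseteq> {a + b |a b. a \<in> Poly_Mapping.keys h \<and> b \<in> Poly_Mapping.keys (h ^ n)}"
      by (simp only: power_Suc keys_mult)
    show ?case
    proof
      fix c assume "c \<in> Poly_Mapping.keys (h ^ Suc n)"
      then obtain x y where "c = x + y" "x \<in> Poly_Mapping.keys h" "y \<in> Poly_Mapping.keys (h ^ n)"
        using \<open>Poly_Mapping.keys (h ^ Suc n) \<subseteq> _\<close> by blast
      moreover have "mdeg x = 1" "mdeg y = n" using Suc lin \<open>x \<in> _\<close> \<open>y \<in> _\<close> by blast+
      ultimately show "c \<in> {b. mdeg b = Suc n}" by (simp add: mdeg_add)
    qed
  qed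
  then show "mdeg a = m" using a by blast
  define r q where "r = m mod p ^ l" "q = m div p ^ l"
  have m: "m = r + p ^ l * q" using r_q_def by simp
  have hm: "h ^ m = h ^ r * (h ^ (p ^ l)) ^ q"
    by (subst m) (simp only: power_add power_mult)
  have "Poly_Mapping.keys (h ^ m) \<subseteq> {x + y |x y. x \<in> Poly_Mapping.keys (h ^ r) \<and> y \<in> Poly_Mapping.keys ((h ^ (p ^ l)) ^ q)}"
    by (simp only: hm keys_mult)
  then obtain x y where xy: "a = x + y" "x \<in> Poly_Mapping.keys (h ^ r)" "y \<in> Poly_Mapping.keys ((h ^ (p ^ l)) ^ q)"
    using a by blast
  have "Poly_Mapping.keys ((h ^ (p ^ l)) ^ q) \<subseteq> {b. \<forall>k. p ^ l dvd lk b k}"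
  proof (rule keys_pow_inv)
    show "0 \<in> {b. \<forall>k. p ^ l dvd lk b k}" by simp
    show "a + b \<in> {b. \<forall>k. p ^ l dvd lk b k}" if "a \<in> {b. \<forall>k. p ^ l dvd lk b k}" "b \<in> {b. \<forall>k. p ^ l dvd lk b k}" for a b
      using that by (simp add: lookup_add)
    show "Poly_Mapping.keys (h ^ p ^ l) \<subseteq> {b. \<forall>k. p ^ l dvd lk b k}" by (rule frob_keys[OF pr ch])
  qed
  then have dv: "p ^ l dvd lk y k" for k using xy by blast
  have "Sm p (lk a) l = Sm p (lk x) l"
    unfolding Sm_def xy(1) lookup_add
  proof (rule sum.cong)
    fix k
    obtain t where "lk y k = p ^ l * t" using dv by blast
    then show "(lk x k + lk y k) mod p ^ l = lk x k mod p ^ l" by simp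
  qed simp
  also have "\<dots> \<le> mdeg x" by (rule Sm_le_mdeg)
  also have "mdeg x = r" using deg xy by blast
  finally show "Sm p (lk a) l \<le> m mod p ^ l" using r_q_def by simp
qed

lemma prod_pow_keys:
  fixes L :: "'n::finite \<Rightarrow> ('n, 'k::field) mpoly"
  assumes pr: "prime p" and ch: "CHAR('k) = p" and lin: "\<And>i. Poly_Mapping.keys (L i) \<subseteq> {b. mdeg b = 1}"
  shows "a \<in> Poly_Mapping.keys (\<Prod>i\<in>A. L i ^ e i) \<Longrightarrow> mdeg a = (\<Sum>i\<in>A. e i) \<and> (\<forall>l. Sm p (lk a) l \<le> (\<Sum>i\<in>A. e i mod p ^ l))"
proof (induction A arbitrary: a rule: infinite_finite_induct)
  case (infinite A)
  then show ?case by (simp add: Sm_def)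
next
  case empty
  then show ?case by (simp add: Sm_def)
next
  case (insert i A)
  have pe: "(\<Prod>i\<in>insert i A. L i ^ e i) = L i ^ e i * (\<Prod>i\<in>A. L i ^ e i)"
    using insert.hyps by simp
  have "Poly_Mapping.keys (\<Prod>i\<in>insert i A. L i ^ e i) \<subseteq> {x + y |x y. x \<in> Poly_Mapping.keys (L i ^ e i) \<and> y \<in> Poly_Mapping.keys (\<Prod>i\<in>A. L i ^ e i)}"
    by (simp only: pe keys_mult)
  then obtain x y where xy: "a = x + y" "x \<in> Poly_Mapping.keys (L i ^ e i)" "y \<in> Poly_Mapping.keys (\<Prod>i\<in>A. L i ^ e i)"
    using insert.prems by blast
  note ih = insert.IH[OF xy(3)]
  note lx = lin_pow_keys[OF pr ch lin xy(2)]
  have "mdeg a = (\<Sum>i\<in>insert i A. e i)" using ih lx insert.hyps xy(1) by (simp add: mdeg_add)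
  moreover have "Sm p (lk a) l \<le> (\<Sum>i\<in>insert i A. e i mod p ^ l)" for l
  proof -
    have "Sm p (lk a) l \<le> Sm p (lk x) l + Sm p (lk y) l" unfolding xy(1) by (rule Sm_add_le)
    also have "\<dots> \<le> e i mod p ^ l + (\<Sum>i\<in>A. e i mod p ^ l)" using ih lx(2)[of l] by (meson add_mono)
    finally show ?thesis using insert.hyps by simp
  qed
  ultimately show ?case by blast
qed

lemma Lg_lin: "Poly_Mapping.keys (Lg g i) \<subseteq> {b. mdeg b = 1}"
proof -
  have "Poly_Mapping.keys (Lg g i) \<subseteq> (\<Union>k\<in>UNIV. Poly_Mapping.keys (cst (g k i) * var k))"
    unfolding Lg_def by (rule keys_sum)
  also have "\<dots> \<subseteq> {b. mdeg b = 1}"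
    by (auto simp: var_def monomial_x_def cst_single mdeg_single split: if_splits)
  finally show ?thesis .
qed

lemma act_monomial_keys:
  fixes g :: "'n::finite \<Rightarrow> 'n \<Rightarrow> 'k::field"
  assumes pr: "prime p" and ch: "CHAR('k) = p"
    and a: "a \<in> Poly_Mapping.keys (act g (monomial_x b))"
  shows "mdeg a = mdeg b" "Sm p (lk a) l \<le> Sm p (lk b) l"
proof -
  have "a \<in> Poly_Mapping.keys (\<Prod>i\<in>UNIV. Lg g i ^ lk b i)"
    using a by (simp add: act_monomial monoL_def)
  note r = prod_pow_keys[OF pr ch Lg_lin this]
  then show "mdeg a = mdeg b" by (simp add: mdeg_def)
  show "Sm p (lk a) l \<le> Sm p (lk b) l" using r by (simp add: Sm_def)
qed


lemma coeff_binom_poly: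
  fixes Z :: "'k::comm_ring_1 poly"
  assumes "Z = monom 1 1"
  shows "coeff ((Z + 1) ^ m) t = of_nat (m choose t)"
proof -
  have "(Z + 1) ^ m = (\<Sum>k\<le>m. of_nat (m choose k) * Z ^ k * 1 ^ (m - k))" by (rule binomial_ring)
  also have "\<dots> = (\<Sum>k\<le>m. monom (of_nat (m choose k)) k)"
    by (simp add: assms monom_power of_nat_monom mult_monom)
  finally show ?thesis by (simp add: coeff_sum binomial_eq_0 not_le)
qed

lemma coeff_binom_pow:
  fixes W :: "'k::comm_ring_1 poly"
  assumes "W = monom 1 d"
  shows "coeff ((W + 1) ^ q) v = (\<Sum>s\<le>q. if v = d * s then of_nat (q choose s) else 0)"
proof -
  have "(W + 1) ^ q = (\<Sum>s\<le>q. of_nat (q choose s) * W ^ s * 1 ^ (q - s))" by (rule binomial_ring)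
  also have "\<dots> = (\<Sum>s\<le>q. monom (of_nat (q choose s)) (d * s))"
    by (simp add: assms monom_power of_nat_monom mult_monom mult.commute)
  finally show ?thesis by (simp add: coeff_sum eq_commute)
qed

lemma lucas_lite:
  assumes pr: "prime p" and ch: "CHAR('k::field) = p" and dg: "digit p n c \<ge> 1"
  shows "(of_nat (n choose p ^ c) :: 'k) \<noteq> 0"
proof -
  define Z :: "'k poly" where "Z = monom 1 1"
  define P where "P = p ^ c"
  have P0: "P > 0" using pr P_def by (simp add: prime_gt_0_nat)
  define r q where "r = n mod P" "q = n div P"
  have n: "n = r + P * q" using r_q_def by simp
  have qm: "q mod p = digit p n c" using r_q_def P_def by (simp add: digit_def)
  then have q1: "q \<ge> 1" using dg by (cases q) auto
  have chp: "prime CHAR('k poly)" using pr ch by simp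
  have fr: "(Z + 1) ^ P = Z ^ P + 1"
    using freshmans_dream'[OF chp, of P c Z 1] ch P_def by simp
  have ZP: "Z ^ P = monom 1 P" by (simp add: Z_def monom_power)
  have "(Z + 1) ^ n = (Z + 1) ^ r * (monom 1 P + 1) ^ q"
    by (simp add: n power_add power_mult fr ZP)
  then have "coeff ((Z + 1) ^ n) P = (\<Sum>i\<le>P. coeff ((Z + 1) ^ r) i * coeff ((monom 1 P + 1) ^ q) (P - i))"
    by (simp add: coeff_mult)
  also have "\<dots> = (\<Sum>i\<le>P. of_nat (r choose i) * (\<Sum>s\<le>q. if P - i = P * s then of_nat (q choose s) else 0))"
    by (simp add: coeff_binom_poly[OF Z_def] coeff_binom_pow)
  also have "\<dots> = (\<Sum>i\<in>{0}. of_nat (r choose i) * (\<Sum>s\<le>q. if P - i = P * s then of_nat (q choose s) else 0))"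
  proof (rule sum.mono_neutral_right)
    show "\<forall>i\<in>{..P} - {0}. of_nat (r choose i) * (\<Sum>s\<le>q. if P - i = P * s then of_nat (q choose s) else (0::'k)) = 0"
    proof
      fix i assume i: "i \<in> {..P} - {0}"
      show "of_nat (r choose i) * (\<Sum>s\<le>q. if P - i = P * s then of_nat (q choose s) else (0::'k)) = 0"
      proof (cases "i = P")
        case True
        have "r < P" using r_q_def P0 by simp
        then show ?thesis using True by (simp add: binomial_eq_0)
      next
        case False
        then have "0 < P - i" "P - i < P" using i by auto
        then have "P - i \<noteq> P * s" for s by (cases s) auto
        then show ?thesis by simp
      qed
    qed
  qed auto
  also have "\<dots> = (\<Sum>s\<le>q. if P = P * s then of_nat (q choose s) else 0)" by simp
  also have "\<dots> = (\<Sum>s\<in>{1}. if P = P * s then of_nat (q choose s) else (0::'k))"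
    by (rule sum.mono_neutral_right) (use P0 q1 in auto)
  also have "\<dots> = of_nat q" by simp
  finally have eq: "(of_nat (n choose P) :: 'k) = of_nat q"
    by (simp add: coeff_binom_poly[OF Z_def])
  from qm have "\<not> p dvd q" using dg by (simp add: dvd_eq_mod_eq_0)
  then have "(of_nat q :: 'k) \<noteq> 0" using ch by (simp add: of_nat_eq_0_iff_char_dvd)
  then show ?thesis using eq P_def by simp
qed


lemma var_pow: "(var k :: ('n, 'k::field) mpoly) ^ e = monomial_x (Poly_Mapping.single k e)"
proof (induction e)
  case 0 then show ?case by (simp add: monomial_x_def)
next
  case (Suc e)
  then show ?case by (simp add: var_def monomial_x_def mult_single single_add[symmetric])
qed

lemma monomial_mult: "(monomial_x a :: ('n, 'k::field) mpoly) * monomial_x b = monomial_x (a + b)"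
  by (simp add: monomial_x_def mult_single)

lemma prod_monomial: "(\<Prod>k\<in>A. (monomial_x (F k) :: ('n, 'k::field) mpoly)) = monomial_x (\<Sum>k\<in>A. F k)"
  by (induction A rule: infinite_finite_induct) (simp_all add: monomial_x_def mult_single)

lemma sum_single_lookup: "(\<Sum>k\<in>UNIV. Poly_Mapping.single k (lk m k)) = (m :: 'n::finite \<Rightarrow>\<^sub>0 nat)"
  by (rule poly_mapping_eqI) (simp add: lookup_sum lookup_single when_def)

lemma prod_var_pow: "(\<Prod>k\<in>UNIV. (var k :: ('n::finite, 'k::field) mpoly) ^ lk m k) = monomial_x m"
  by (simp add: var_pow prod_monomial sum_single_lookup)

lemma cst_pow: "cst c ^ n = cst (c ^ n)"
  by (induction n) (simp_all add: cst_mult)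

lemma cst_prod: "(\<Prod>k\<in>A. cst (F k)) = cst (\<Prod>k\<in>A. F k)"
  by (induction A rule: infinite_finite_induct) (simp_all add: cst_mult)

lemma sum_if_eq: "(\<Sum>l\<in>(UNIV :: 'n::finite set). if l = a then F l else 0) = (F a :: 'k::comm_monoid_add)"
  by simp

definition dgm :: "'n \<Rightarrow> 'k::field \<Rightarrow> 'n \<Rightarrow> 'n \<Rightarrow> 'k" where
  "dgm i0 c a b = (if a = b then (if a = i0 then c else 1) else 0)"

lemma dgm_GL:
  assumes "c \<noteq> 0" shows "dgm i0 c \<in> (GL :: ('n::finite \<Rightarrow> 'n \<Rightarrow> 'k::field) set)"
  unfolding GL_def
proof (intro CollectI exI[of _ "dgm i0 (inverse c)"] conjI allI)
  fix i j :: 'n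
  have "(\<Sum>l\<in>UNIV. dgm i0 c i l * dgm i0 (inverse c) l j) = (\<Sum>l\<in>UNIV. if l = i then dgm i0 c i i * dgm i0 (inverse c) i j else 0)"
    by (rule sum.cong) (auto simp: dgm_def)
  also have "\<dots> = (if i = j then 1 else 0)" using assms by (simp add: dgm_def)
  finally show "(\<Sum>l\<in>UNIV. dgm i0 c i l * dgm i0 (inverse c) l j) = (if i = j then 1 else 0)" .
  have "(\<Sum>l\<in>UNIV. dgm i0 (inverse c) i l * dgm i0 c l j) = (\<Sum>l\<in>UNIV. if l = i then dgm i0 (inverse c) i i * dgm i0 c i j else 0)"
    by (rule sum.cong) (auto simp: dgm_def)
  also have "\<dots> = (if i = j then 1 else 0)" using assms by (simp add: dgm_def)
  finally show "(\<Sum>l\<in>UNIV. dgm i0 (inverse c) i l * dgm i0 c l j) = (if i = j then 1 else 0)" .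
qed

lemma Lg_dgm: "Lg (dgm i0 c) k = cst (dgm i0 c k k) * (var k :: ('n::finite, 'k::field) mpoly)"
proof -
  have "Lg (dgm i0 c) k = (\<Sum>j\<in>UNIV. if j = k then cst (dgm i0 c k k) * (var k :: ('n, 'k) mpoly) else 0)"
    unfolding Lg_def by (rule sum.cong) (auto simp: dgm_def)
  then show ?thesis by simp
qed

lemma monoL_dgm: "monoL (Lg (dgm i0 c)) m = cst (c ^ lk m i0) * (monomial_x m :: ('n::finite, 'k::field) mpoly)"
proof -
  have "monoL (Lg (dgm i0 c)) m = (\<Prod>k\<in>UNIV. cst (dgm i0 c k k ^ lk m k) * (var k :: ('n, 'k) mpoly) ^ lk m k)"
    unfolding monoL_def Lg_dgm by (simp add: power_mult_distrib cst_pow)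
  also have "\<dots> = cst (\<Prod>k\<in>UNIV. dgm i0 c k k ^ lk m k) * monomial_x m"
    by (simp add: prod.distrib cst_prod prod_var_pow)
  also have "(\<Prod>k\<in>UNIV. dgm i0 c k k ^ lk m k) = (\<Prod>k\<in>UNIV. if k = i0 then c ^ lk m i0 else 1)"
    by (rule prod.cong) (auto simp: dgm_def)
  also have "\<dots> = c ^ lk m i0" by simp
  finally show ?thesis .
qed

lemma act_dgm: "act (dgm i0 c) f = (\<Sum>m\<in>Poly_Mapping.keys f. Poly_Mapping.single m (lk f m * c ^ lk m i0))"
  unfolding act_ev ev_def monoL_dgm
  by (rule sum.cong) (simp_all add: monomial_x_def cst_single mult.assoc cst_mult[symmetric])

definition elm :: "'n \<Rightarrow> 'n \<Rightarrow> 'n \<Rightarrow> 'n \<Rightarrow> 'k::field" where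
  "elm i j a b = (if a = b then 1 else 0) + (if a = i \<and> b = j then 1 else 0)"

lemma elm_GL:
  assumes ij: "i \<noteq> j" shows "elm i j \<in> (GL :: ('n::finite \<Rightarrow> 'n \<Rightarrow> 'k::field) set)"
  unfolding GL_def
proof (intro CollectI exI[of _ "\<lambda>a b. (if a = b then 1 else 0) - (if a = i \<and> b = j then 1 else 0)"] conjI allI)
  fix a b :: 'n
  let ?h = "\<lambda>a b. (if a = b then 1 else 0) - (if a = i \<and> b = j then (1::'k) else 0)"
  have "(\<Sum>l\<in>UNIV. elm i j a l * ?h l b)
     = (\<Sum>l\<in>UNIV. (if l = a then ?h a b else 0) + (if l = j then (if a = i then ?h j b else 0) else 0))"
    by (rule sum.cong) (auto simp: elm_def)
  also have "\<dots> = ?h a b + (if a = i then ?h j b else 0)" by (simp only: sum.distrib sum_if_eq)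
  also have "\<dots> = (if a = b then 1 else 0)" using ij by auto
  finally show "(\<Sum>l\<in>UNIV. elm i j a l * ?h l b) = (if a = b then 1 else 0)" .
  have "(\<Sum>l\<in>UNIV. ?h a l * elm i j l b)
     = (\<Sum>l\<in>UNIV. (if l = a then elm i j a b else 0) - (if l = j then (if a = i then elm i j j b else 0) else 0))"
    by (rule sum.cong) (auto simp: elm_def)
  also have "\<dots> = elm i j a b - (if a = i then elm i j j b else 0)" by (simp only: sum_subtractf sum_if_eq)
  also have "\<dots> = (if a = b then 1 else 0)" using ij by (auto simp: elm_def)
  finally show "(\<Sum>l\<in>UNIV. ?h a l * elm i j l b) = (if a = b then 1 else 0)" .
qed


lemma alg_closed_infinite: "infinite (UNIV :: 'k::alg_closed_field set)"
proof
  assume fin: "finite (UNIV :: 'k set)"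
  define Q :: "'k poly" where "Q = (\<Prod>a\<in>UNIV. [:-a, 1:])"
  have "degree Q = (\<Sum>a\<in>(UNIV::'k set). degree [:-a, 1:])"
    unfolding Q_def using degree_prod_eq_sum_degree[of "UNIV :: 'k set" "\<lambda>a. [:-a, 1:]"] by auto
  also have "\<dots> = card (UNIV :: 'k set)" by simp
  finally have dQ: "degree Q = card (UNIV :: 'k set)" .
  have "card (UNIV :: 'k set) > 0" using fin by (simp add: card_gt_0_iff)
  then have "degree (Q + 1) = degree Q" using dQ by (intro degree_add_eq_left) simp
  then have "degree (Q + 1) > 0" using dQ \<open>card _ > 0\<close> by simp
  then obtain x where "poly (Q + 1) x = 0" using alg_closed_imp_poly_has_root by blast
  moreover have "poly Q x = 0"
    unfolding Q_def poly_prod using fin by (intro prod_zero) (auto intro!: bexI[of _ x])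
  ultimately show False by simp
qed

lemma roots_unity_finite:
  assumes "k > 0" shows "finite {x :: 'k::field. x ^ k = 1}"
proof -
  have "monom (1::'k) k - 1 \<noteq> 0"
  proof
    assume "monom (1::'k) k - 1 = 0"
    then have "coeff (monom (1::'k) k - 1) k = 0" by simp
    then show False using assms by simp
  qed
  then have "finite {x. poly (monom (1::'k) k - 1) x = 0}" by (rule poly_roots_finite)
  moreover have "{x. poly (monom (1::'k) k - 1) x = 0} = {x. x ^ k = 1}" by (auto simp: poly_monom)
  ultimately show ?thesis by simp
qed

lemma cst_diff: "cst (a - b) = cst a - cst b" by (simp add: cst_def single_diff)

lemma interp:
  fixes F :: "nat \<Rightarrow> ('n::finite, 'k::field) mpoly"
  assumes I: "is_ideal I" and inf: "infinite (UNIV :: 'k set)"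
  shows "(\<forall>c. c \<noteq> 0 \<longrightarrow> (\<Sum>e\<le>D. cst (c ^ e) * F e) \<in> I) \<Longrightarrow> e \<le> D \<Longrightarrow> F e \<in> I"
proof (induction D arbitrary: F e)
  case 0
  have "(\<Sum>e\<le>0. cst (1 ^ e) * F e) \<in> I" using 0 by (metis one_neq_zero)
  then show ?case using 0 by simp
next
  case (Suc D)
  let ?bad = "{0} \<union> (\<Union>e\<in>{..D}. {x :: 'k. x ^ (Suc D - e) = 1})"
  have "finite {x::'k. x ^ (Suc D - e) = 1}" if "e \<le> D" for e using that by (intro roots_unity_finite) simp
  then have "finite ?bad" by auto
  then obtain c where c: "c \<notin> ?bad" using ex_new_if_finite[OF inf] by blast
  then have c0: "c \<noteq> 0" by simp
  have cne: "c ^ e - c ^ Suc D \<noteq> 0" if "e \<le> D" for e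
  proof
    assume "c ^ e - c ^ Suc D = 0"
    then have h1: "c ^ e = c ^ Suc D" by simp
    have "c ^ Suc D = c ^ e * c ^ (Suc D - e)" using that by (simp flip: power_add)
    then have "c ^ e * 1 = c ^ e * c ^ (Suc D - e)" using h1 by simp
    moreover have "c ^ e \<noteq> 0" using c0 by simp
    ultimately have "c ^ (Suc D - e) = 1" by (metis mult_left_cancel)
    then show False using c that by auto
  qed
  define F' where "F' = (\<lambda>e. cst (c ^ e - c ^ Suc D) * F e)"
  have "(\<Sum>e\<le>D. cst (l ^ e) * F' e) \<in> I" if l: "l \<noteq> 0" for l
  proof -
    have t: "cst ((c * l) ^ e) * F e - cst (c ^ Suc D) * (cst (l ^ e) * F e)
        = cst (l ^ e * (c ^ e - c ^ Suc D)) * F e" for e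
      by (simp add: cst_mult cst_diff power_mult_distrib algebra_simps)
    have "(\<Sum>e\<le>Suc D. cst ((c * l) ^ e) * F e) - cst (c ^ Suc D) * (\<Sum>e\<le>Suc D. cst (l ^ e) * F e)
        = (\<Sum>e\<le>Suc D. cst ((c * l) ^ e) * F e - cst (c ^ Suc D) * (cst (l ^ e) * F e))"
      by (simp only: sum_distrib_left sum_subtractf)
    also have "\<dots> = (\<Sum>e\<le>Suc D. cst (l ^ e * (c ^ e - c ^ Suc D)) * F e)"
      by (simp only: t)
    also have "\<dots> = (\<Sum>e\<le>D. cst (l ^ e * (c ^ e - c ^ Suc D)) * F e)"
      by (simp only: sum.atMost_Suc) simp
    also have "\<dots> = (\<Sum>e\<le>D. cst (l ^ e) * F' e)"
      by (simp add: F'_def cst_mult[symmetric] mult.assoc)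
    finally have eq: "(\<Sum>e\<le>D. cst (l ^ e) * F' e) = (\<Sum>e\<le>Suc D. cst ((c * l) ^ e) * F e) - cst (c ^ Suc D) * (\<Sum>e\<le>Suc D. cst (l ^ e) * F e)" ..
    have "(\<Sum>e\<le>Suc D. cst ((c * l) ^ e) * F e) \<in> I" using Suc.prems(1) c0 l by simp
    moreover have "(\<Sum>e\<le>Suc D. cst (l ^ e) * F e) \<in> I" using Suc.prems(1) l by simp
    ultimately show ?thesis unfolding eq using I by (simp add: ideal_diff ideal_mult)
  qed
  then have F': "F' e \<in> I" if "e \<le> D" for e using Suc.IH that by blast
  have lowF: "F e \<in> I" if "e \<le> D" for e
  proof -
    have "F e = cst (inverse (c ^ e - c ^ Suc D)) * F' e"
      using cne[OF that] by (simp add: F'_def mult.assoc[symmetric] cst_mult)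
    then show ?thesis using F'[OF that] I by (simp add: ideal_mult)
  qed
  show ?case
  proof (cases "e \<le> D")
    case True then show ?thesis using lowF by blast
  next
    case False
    then have e: "e = Suc D" using Suc.prems(2) by simp
    have "(\<Sum>e\<le>Suc D. cst (1 ^ e) * F e) \<in> I" using Suc.prems(1) by (metis one_neq_zero)
    then have "(\<Sum>e\<le>D. F e) + F (Suc D) \<in> I" by simp
    moreover have "(\<Sum>e\<le>D. F e) \<in> I" using lowF I by (intro ideal_sum) auto
    ultimately have "((\<Sum>e\<le>D. F e) + F (Suc D)) - (\<Sum>e\<le>D. F e) \<in> I" by (rule ideal_diff[OF I])
    then show ?thesis using e by simp
  qed
qed


lemma keys_restrict_sum:
  "Poly_Mapping.keys (\<Sum>x\<in>S. Poly_Mapping.single x (lk f x)) \<subseteq> S"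
proof -
  have "Poly_Mapping.keys (\<Sum>x\<in>S. Poly_Mapping.single x (lk f x)) \<subseteq> (\<Union>x\<in>S. Poly_Mapping.keys (Poly_Mapping.single x (lk f x)))"
    by (rule keys_sum)
  also have "\<dots> \<subseteq> S" by auto
  finally show ?thesis .
qed

lemma lookup_restrict_sum:
  assumes "finite S"
  shows "lk (\<Sum>x\<in>S. Poly_Mapping.single x (lk f x)) m = (if m \<in> S then lk f m else 0)"
  using assms by (simp add: lookup_sum lookup_single when_def)

lemma monomial_closed:
  fixes I :: "('n::finite, 'k::alg_closed_field) mpoly set"
  assumes I: "is_ideal I" and inv: "GL_invariant I"
  shows "f \<in> I \<Longrightarrow> m \<in> Poly_Mapping.keys f \<Longrightarrow> monomial_x m \<in> I"
proof (induction "card (Poly_Mapping.keys f)" arbitrary: f m rule: less_induct)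
  case less
  show ?case
  proof (cases "\<exists>m1\<in>Poly_Mapping.keys f. \<exists>m2\<in>Poly_Mapping.keys f. m1 \<noteq> m2")
    case False
    then have k: "Poly_Mapping.keys f = {m}" using less.prems(2) by auto
    have fe: "f = Poly_Mapping.single m (lk f m)"
      by (subst poly_expand) (simp add: k)
    have c0: "lk f m \<noteq> 0" using less.prems(2) by (simp add: in_keys_iff)
    have "monomial_x m = cst (inverse (lk f m)) * f"
      by (subst fe) (simp add: cst_single c0 monomial_x_def)
    then show ?thesis using less.prems(1) I by (simp add: ideal_mult)
  next
    case True
    then obtain m1 m2 where m12: "m1 \<in> Poly_Mapping.keys f" "m2 \<in> Poly_Mapping.keys f" "m1 \<noteq> m2" by blast
    then obtain i0 where i0: "lk m1 i0 \<noteq> lk m2 i0" by (meson poly_mapping_eqI)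
    define D where "D = Max ((\<lambda>x. lk x i0) ` Poly_Mapping.keys f)"
    define F where "F = (\<lambda>e. \<Sum>x\<in>{x\<in>Poly_Mapping.keys f. lk x i0 = e}. Poly_Mapping.single x (lk f x))"
    have img: "(\<lambda>x. lk x i0) ` Poly_Mapping.keys f \<subseteq> {..D}"
      unfolding D_def by (auto intro: Max_ge)
    have act_eq: "act (dgm i0 c) f = (\<Sum>e\<le>D. cst (c ^ e) * F e)" for c :: 'k
    proof -
      have "act (dgm i0 c) f = (\<Sum>x\<in>Poly_Mapping.keys f. cst (c ^ lk x i0) * Poly_Mapping.single x (lk f x))"
        unfolding act_dgm by (rule sum.cong) (simp_all add: cst_single mult.commute[of "lk f _"])
      also have "\<dots> = (\<Sum>e\<le>D. \<Sum>x\<in>{x\<in>Poly_Mapping.keys f. lk x i0 = e}. cst (c ^ lk x i0) * Poly_Mapping.single x (lk f x))"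
        by (rule sum.group[symmetric]) (simp_all add: img)
      also have "\<dots> = (\<Sum>e\<le>D. cst (c ^ e) * F e)"
        unfolding F_def sum_distrib_left by (intro sum.cong) auto
      finally show ?thesis .
    qed
    have FI: "F e \<in> I" if "e \<le> D" for e
    proof (rule interp[OF I alg_closed_infinite _ that])
      show "\<forall>c. c \<noteq> 0 \<longrightarrow> (\<Sum>e\<le>D. cst (c ^ e) * F e) \<in> I"
      proof (intro allI impI)
        fix c :: 'k assume "c \<noteq> 0"
        then have "act (dgm i0 c) f \<in> I" using inv dgm_GL less.prems(1) unfolding GL_invariant_def by blast
        then show "(\<Sum>e\<le>D. cst (c ^ e) * F e) \<in> I" by (simp add: act_eq)
      qed
    qed
    define e where "e = lk m i0"
    have eD: "e \<le> D" using img less.prems(2) e_def by auto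
    have mF: "m \<in> Poly_Mapping.keys (F e)"
      using less.prems(2) lookup_restrict_sum[of "{x\<in>Poly_Mapping.keys f. lk x i0 = e}" f m]
      unfolding F_def e_def by (simp add: in_keys_iff)
    have sub: "Poly_Mapping.keys (F e) \<subseteq> {x\<in>Poly_Mapping.keys f. lk x i0 = e}"
      unfolding F_def by (rule keys_restrict_sum)
    have "\<not> (m1 \<in> Poly_Mapping.keys (F e) \<and> m2 \<in> Poly_Mapping.keys (F e))" using sub i0 by auto
    then have "Poly_Mapping.keys (F e) \<subset> Poly_Mapping.keys f" using sub m12 by auto
    then have "card (Poly_Mapping.keys (F e)) < card (Poly_Mapping.keys f)"
      by (rule psubset_card_mono[rotated]) simp
    then show ?thesis using less.hyps FI[OF eD] mF by blast
  qed
qed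


lemma Lg_elm:
  assumes ij: "i \<noteq> j"
  shows "Lg (elm i j) b = var b + (if b = j then var i else (0 :: ('n::finite, 'k::field) mpoly))"
proof -
  have "Lg (elm i j) b = (\<Sum>k\<in>UNIV. (if k = b then var b else 0) + (if k = i then (if b = j then var i else 0) else (0 :: ('n, 'k) mpoly)))"
    unfolding Lg_def by (rule sum.cong) (auto simp: elm_def cst_add distrib_right)
  also have "\<dots> = var b + (if b = j then var i else 0)" by (simp only: sum.distrib sum_if_eq)
  finally show ?thesis .
qed

lemma monoL_elm:
  assumes ij: "i \<noteq> j"
  shows "monoL (Lg (elm i j)) m = (var i + var j) ^ lk m j * (monomial_x (m - Poly_Mapping.single j (lk m j)) :: ('n::finite, 'k::field) mpoly)"
proof -
  define m0 where "m0 = m - Poly_Mapping.single j (lk m j)"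
  have lm0: "lk m0 b = (if b = j then 0 else lk m b)" for b
    by (simp add: m0_def lookup_minus lookup_single when_def)
  have "monoL (Lg (elm i j)) m = Lg (elm i j) j ^ lk m j * (\<Prod>b\<in>UNIV - {j}. Lg (elm i j) b ^ lk m b)"
    unfolding monoL_def by (simp add: prod.remove)
  also have "(\<Prod>b\<in>UNIV - {j}. Lg (elm i j) b ^ lk m b) = (\<Prod>b\<in>UNIV - {j}. (var b :: ('n, 'k) mpoly) ^ lk m0 b)"
    by (rule prod.cong) (simp_all add: Lg_elm[OF ij] lm0)
  also have "\<dots> = monomial_x m0"
  proof -
    have "monomial_x m0 = (\<Prod>b\<in>UNIV. (var b :: ('n, 'k) mpoly) ^ lk m0 b)" by (simp add: prod_var_pow)
    also have "\<dots> = (var j) ^ lk m0 j * (\<Prod>b\<in>UNIV - {j}. (var b :: ('n, 'k) mpoly) ^ lk m0 b)"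
      by (simp add: prod.remove)
    finally show ?thesis by (simp add: lm0)
  qed
  also have "Lg (elm i j) j = var i + var j" by (simp add: Lg_elm[OF ij] add.commute)
  finally show ?thesis unfolding m0_def .
qed

lemma act_elm_coeff:
  fixes m :: "'n::finite \<Rightarrow>\<^sub>0 nat"
  assumes ij: "i \<noteq> j" and P: "P \<le> lk m j"
  defines "m0 \<equiv> m - Poly_Mapping.single j (lk m j)"
  shows "lk (act (elm i j) (monomial_x m :: ('n, 'k::field) mpoly))
     (Poly_Mapping.single i P + Poly_Mapping.single j (lk m j - P) + m0) = of_nat (lk m j choose P)"
proof -
  define n where "n = lk m j"
  define X where "X = (\<lambda>t. Poly_Mapping.single i t + Poly_Mapping.single j (n - t) + m0)"
  have "act (elm i j) (monomial_x m :: ('n, 'k) mpoly) = (var i + var j) ^ n * monomial_x m0"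
    by (simp add: act_monomial monoL_elm[OF ij] n_def m0_def)
  also have "\<dots> = (\<Sum>t\<le>n. of_nat (n choose t) * var i ^ t * var j ^ (n - t)) * monomial_x m0"
    by (simp only: binomial_ring)
  also have "\<dots> = (\<Sum>t\<le>n. Poly_Mapping.single (X t) (of_nat (n choose t)))"
  proof -
    have "of_nat c * var i ^ t * var j ^ u * monomial_x m0
        = Poly_Mapping.single (Poly_Mapping.single i t + Poly_Mapping.single j u + m0) (of_nat c :: 'k)" for c t u
    proof -
      have oc: "(of_nat c :: ('n, 'k) mpoly) * Poly_Mapping.single x 1 = Poly_Mapping.single x (of_nat c)" for x
      proof -
        have "(of_nat c :: ('n, 'k) mpoly) = Poly_Mapping.single 0 (of_nat c)" by (simp only: single_of_nat)
        then have "(of_nat c :: ('n, 'k) mpoly) * Poly_Mapping.single x 1 = Poly_Mapping.single 0 (of_nat c) * Poly_Mapping.single x 1"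
          by simp
        also have "\<dots> = Poly_Mapping.single x (of_nat c)" by (simp only: mult_single add_0 mult_1_right)
        finally show ?thesis .
      qed
      show ?thesis
        apply (simp add: var_pow monomial_mult mult.assoc oc[unfolded monomial_x_def[symmetric]])
        apply (simp add: monomial_x_def mult_single add.assoc)
        done
    qed
    then show ?thesis by (simp add: sum_distrib_right X_def)
  qed
  finally have a: "act (elm i j) (monomial_x m :: ('n, 'k) mpoly) = (\<Sum>t\<le>n. Poly_Mapping.single (X t) (of_nat (n choose t)))" .
  have inj: "X t = X P \<longleftrightarrow> t = P" for t
  proof
    assume "X t = X P"
    then have "lk (X t) i = lk (X P) i" by simp
    then show "t = P" using ij by (simp add: X_def lookup_add lookup_single when_def)
  qed simp
  have "lk (act (elm i j) (monomial_x m :: ('n, 'k) mpoly)) (X P) = (\<Sum>t\<le>n. if t = P then of_nat (n choose t) else 0)"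
    unfolding a lookup_sum by (rule sum.cong) (auto simp: lookup_single when_def inj)
  also have "\<dots> = of_nat (n choose P)" using P n_def by simp
  finally show ?thesis by (simp add: X_def n_def)
qed

lemma step_closed:
  fixes I :: "('n::finite, 'k::alg_closed_field) mpoly set"
  assumes I: "is_ideal I" and inv: "GL_invariant I" and pr: "prime p" and ch: "CHAR('k) = p"
    and mI: "monomial_x m \<in> I" and ij: "i \<noteq> j" and dj: "digit p (lk m j) c \<ge> 1"
    and m': "lk m' = mv (lk m) i j (p ^ c)"
  shows "monomial_x m' \<in> I"
proof -
  have p0: "p > 0" using pr by (simp add: prime_gt_0_nat)
  have P: "p ^ c \<le> lk m j" using digit_minus_pow(1)[OF p0 dj] .
  define m0 where "m0 = m - Poly_Mapping.single j (lk m j)"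
  have eq: "m' = Poly_Mapping.single i (p ^ c) + Poly_Mapping.single j (lk m j - p ^ c) + m0"
  proof (rule poly_mapping_eqI)
    fix k
    show "lk m' k = lk (Poly_Mapping.single i (p ^ c) + Poly_Mapping.single j (lk m j - p ^ c) + m0) k"
      using ij unfolding m' m0_def
      by (auto simp: mv_def lookup_add lookup_minus lookup_single when_def)
  qed
  have "act (elm i j) (monomial_x m) \<in> I" using inv elm_GL[OF ij] mI unfolding GL_invariant_def by blast
  moreover have "m' \<in> Poly_Mapping.keys (act (elm i j) (monomial_x m :: ('n, 'k) mpoly))"
    unfolding in_keys_iff eq m0_def act_elm_coeff[OF ij P] using lucas_lite[OF pr ch dj] by simp
  ultimately show ?thesis using monomial_closed[OF I inv] by blast
qed


lemma lk_Abs_fin: "lk (Abs_poly_mapping (g :: 'n::finite \<Rightarrow> nat)) = g"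
  by (rule lookup_Abs_poly_mapping) simp

lemma reach_closed:
  fixes I :: "('n::finite, 'k::alg_closed_field) mpoly set"
  assumes I: "is_ideal I" and inv: "GL_invariant I" and pr: "prime p" and ch: "CHAR('k) = p"
  shows "(stepf p)\<^sup>*\<^sup>* f g \<Longrightarrow> lk b = f \<Longrightarrow> monomial_x b \<in> I \<Longrightarrow> lk b' = g \<Longrightarrow> monomial_x b' \<in> I"
proof (induction arbitrary: b' rule: rtranclp_induct)
  case base
  then have "b' = b" by (intro poly_mapping_eqI) simp
  then show ?case using base by simp
next
  case (step g h)
  define bg where "bg = Abs_poly_mapping g"
  have lbg: "lk bg = g" by (simp add: bg_def lk_Abs_fin)
  have bgI: "monomial_x bg \<in> I" using step.IH[OF step.prems(1,2) lbg] .
  from step.hyps(2) obtain i j k where ijk: "i \<noteq> j" "digit p (g j) k \<ge> 1" "h = mv g i j (p ^ k)"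
    unfolding stepf_def by blast
  show ?case
    by (rule step_closed[OF I inv pr ch bgI ijk(1)]) (use ijk lbg step.prems(3) in simp_all)
qed

lemma dickson_gen:
  fixes M :: "('n \<Rightarrow>\<^sub>0 nat) set"
  assumes "finite V"
  shows "\<exists>F\<subseteq>M. finite F \<and> (\<forall>m\<in>M. \<exists>f\<in>F. \<forall>k\<in>V. lk f k \<le> lk m k)"
  using assms
proof (induction V arbitrary: M rule: finite_induct)
  case empty
  show ?case
  proof (cases "M = {}")
    case True then show ?thesis by auto
  next
    case False
    then obtain m0 where "m0 \<in> M" by blast
    then show ?thesis by (intro exI[of _ "{m0}"]) auto
  qed
next
  case (insert a V)
  have "\<forall>M::('n \<Rightarrow>\<^sub>0 nat) set. \<exists>F. F \<subseteq> M \<and> finite F \<and> (\<forall>m\<in>M. \<exists>f\<in>F. \<forall>k\<in>V. lk f k \<le> lk m k)"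
    using insert.IH by blast
  from choice[OF this] obtain \<Phi> :: "('n \<Rightarrow>\<^sub>0 nat) set \<Rightarrow> ('n \<Rightarrow>\<^sub>0 nat) set"
    where \<Phi>0: "\<forall>M. \<Phi> M \<subseteq> M \<and> finite (\<Phi> M) \<and> (\<forall>m\<in>M. \<exists>f\<in>\<Phi> M. \<forall>k\<in>V. lk f k \<le> lk m k)"
    by blast
  then have \<Phi>: "\<And>M. \<Phi> M \<subseteq> M \<and> finite (\<Phi> M) \<and> (\<forall>m\<in>M. \<exists>f\<in>\<Phi> M. \<forall>k\<in>V. lk f k \<le> lk m k)"
    by blast
  define F0 where "F0 = \<Phi> M"
  define K where "K = Max ((\<lambda>f. lk f a) ` F0)"
  define F where "F = F0 \<union> (\<Union>v\<in>{..<K}. \<Phi> {m\<in>M. lk m a = v})"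
  have "F \<subseteq> M" using \<Phi> unfolding F_def F0_def by blast
  moreover have "finite F" using \<Phi> unfolding F_def F0_def by auto
  moreover have "\<forall>m\<in>M. \<exists>f\<in>F. \<forall>k\<in>insert a V. lk f k \<le> lk m k"
  proof
    fix m assume m: "m \<in> M"
    obtain f0 where f0: "f0 \<in> F0" "\<forall>k\<in>V. lk f0 k \<le> lk m k" using \<Phi> m unfolding F0_def by blast
    show "\<exists>f\<in>F. \<forall>k\<in>insert a V. lk f k \<le> lk m k"
    proof (cases "lk m a \<ge> K")
      case True
      have "lk f0 a \<le> K" unfolding K_def using f0(1) \<Phi> F0_def by (intro Max_ge) auto
      then show ?thesis using f0 True unfolding F_def by (intro bexI[of _ f0]) auto
    next
      case False
      define v where "v = lk m a"
      have mv: "m \<in> {m\<in>M. lk m a = v}" using m v_def by simp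
      obtain f where f: "f \<in> \<Phi> {m\<in>M. lk m a = v}" "\<forall>k\<in>V. lk f k \<le> lk m k" using \<Phi> mv by blast
      have "lk f a = v" using f(1) \<Phi> by blast
      moreover have "f \<in> F" unfolding F_def using f(1) False v_def by auto
      ultimately show ?thesis using f(2) v_def by (intro bexI[of _ f]) auto
    qed
  qed
  ultimately show ?case by blast
qed

lemma dickson:
  fixes M :: "('n::finite \<Rightarrow>\<^sub>0 nat) set"
  shows "\<exists>F\<subseteq>M. finite F \<and> (\<forall>m\<in>M. \<exists>f\<in>F. \<forall>k. lk f k \<le> lk m k)"
  using dickson_gen[of "UNIV :: 'n set" M] by simp

lemma monomial_split:
  assumes "\<forall>k. lk f k \<le> lk m k"
  shows "(monomial_x m :: ('n, 'k::field) mpoly) = monomial_x (m - f) * monomial_x f"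
proof -
  have "m = (m - f) + f" by (rule poly_mapping_eqI) (use assms in \<open>simp add: lookup_add lookup_minus\<close>)
  then show ?thesis by (metis monomial_mult)
qed


lemma carry_ideal_ideal: "is_ideal (carry_ideal p d c)"
  unfolding carry_ideal_def by (rule ideal_gen_ideal)

theorem theorem3:
  fixes I :: "('n::finite, 'k::alg_closed_field) mpoly set"
    and p :: nat
  assumes "CHAR('k) = p" and "p > 0"
    and "is_ideal I"
  shows "GL_invariant I \<longleftrightarrow>
    (\<exists>B. finite B \<and> B \<subseteq> all_carry_patterns TYPE('n) p \<and> I = carry_sum_ideal p B)"
proof -
  have ch: "CHAR('k) = p" and Iid: "is_ideal I" using assms by auto
  have pr: "prime p" using assms prime_CHAR_semidom[where ?'a = 'k] by simp
  have p1: "p > 1" using pr prime_gt_1_nat by blast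
  show ?thesis
  proof
    assume inv: "GL_invariant I"
    define Ms where "Ms = {m. (monomial_x m :: ('n, 'k) mpoly) \<in> I}"
    obtain F where F: "F \<subseteq> Ms" "finite F" "\<forall>m\<in>Ms. \<exists>f\<in>F. \<forall>k. lk f k \<le> lk m k"
      using dickson[of Ms] by blast
    define B where "B = (\<lambda>m. (mdeg m, carry p m)) ` F"
    have fB: "finite B" using F(2) B_def by simp
    have sB: "B \<subseteq> all_carry_patterns TYPE('n) p"
      unfolding B_def all_carry_patterns_def carry_patterns_def by auto
    have J: "is_ideal (carry_sum_ideal p B :: ('n, 'k) mpoly set)"
      unfolding carry_sum_ideal_def by (rule ideal_gen_ideal)
    have sub1: "I \<subseteq> carry_sum_ideal p B"
    proof
      fix f assume fI: "f \<in> I"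
      show "f \<in> carry_sum_ideal p B"
      proof (rule ideal_of_monomials[OF J])
        fix m assume mk: "m \<in> Poly_Mapping.keys f"
        have "m \<in> Ms" using monomial_closed[OF Iid inv fI mk] Ms_def by simp
        then obtain f0 where f0: "f0 \<in> F" "\<forall>k. lk f0 k \<le> lk m k" using F(3) by blast
        have "monomial_x f0 \<in> (carry_ideal p (mdeg f0) (carry p f0) :: ('n, 'k) mpoly set)"
          unfolding carry_ideal_def by (rule subsetD[OF ideal_gen_sub]) auto
        moreover have "carry_ideal p (mdeg f0) (carry p f0) \<subseteq> (carry_sum_ideal p B :: ('n, 'k) mpoly set)"
          unfolding carry_sum_ideal_def B_def using f0(1) by (intro subset_trans[OF _ ideal_gen_sub]) auto
        ultimately have "(monomial_x f0 :: ('n, 'k) mpoly) \<in> carry_sum_ideal p B" by blast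
        moreover have "(monomial_x m :: ('n, 'k) mpoly) = monomial_x (m - f0) * monomial_x f0"
          by (rule monomial_split[OF f0(2)])
        ultimately show "(monomial_x m :: ('n, 'k) mpoly) \<in> carry_sum_ideal p B"
          using J by (metis ideal_mult)
      qed
    qed
    have sub2: "carry_sum_ideal p B \<subseteq> I"
      unfolding carry_sum_ideal_def
    proof (rule ideal_gen_least[OF Iid])
      show "(\<Union>(d, c)\<in>B. carry_ideal p d c) \<subseteq> I"
      proof
        fix x :: "('n, 'k) mpoly" assume "x \<in> (\<Union>(d, c)\<in>B. carry_ideal p d c)"
        then obtain f0 where f0F: "f0 \<in> F" and x: "x \<in> carry_ideal p (mdeg f0) (carry p f0)"
          unfolding B_def by auto
        have f0I: "monomial_x f0 \<in> I" using F(1) f0F Ms_def by auto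
        have "carry_ideal p (mdeg f0) (carry p f0) \<subseteq> I"
          unfolding carry_ideal_def
        proof (rule ideal_gen_least[OF Iid])
          show "{monomial_x b |b. mdeg b = mdeg f0 \<and> carry p b \<le> carry p f0} \<subseteq> I"
          proof
            fix z :: "('n, 'k) mpoly" assume "z \<in> {monomial_x b |b. mdeg b = mdeg f0 \<and> carry p b \<le> carry p f0}"
            then obtain b :: "'n \<Rightarrow>\<^sub>0 nat" where z: "z = monomial_x b" and bd: "mdeg b = mdeg f0" and bc: "carry p b \<le> carry p f0"
              by blast
            have Sle: "\<forall>l. Sm p (lk b) l \<le> Sm p (lk f0) l" using carry_le_iff[OF p1 bd] bc by simp
            define N where "N = mdeg f0"
            have vb: "vanish p N (lk b)"
              by (rule vanish_of_bound[OF p1]) (metis N_def bd lookup_le_mdeg n_less_pow[OF p1] le_less_trans)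
            have vf: "vanish p N (lk f0)"
              by (rule vanish_of_bound[OF p1]) (metis N_def lookup_le_mdeg n_less_pow[OF p1] le_less_trans)
            have "sum (lk f0) UNIV = sum (lk b) UNIV" using bd by (simp add: mdeg_def)
            then have "(stepf p)\<^sup>*\<^sup>* (lk f0) (lk b)" using reach_main[OF p1 vb vf] Sle by blast
            then show "z \<in> I" unfolding z using reach_closed[OF Iid inv pr ch] f0I by blast
          qed
        qed
        then show "x \<in> I" using x by blast
      qed
    qed
    show "\<exists>B. finite B \<and> B \<subseteq> all_carry_patterns TYPE('n) p \<and> I = carry_sum_ideal p B"
      using fB sB sub1 sub2 by blast
  next
    assume "\<exists>B. finite B \<and> B \<subseteq> all_carry_patterns TYPE('n) p \<and> I = carry_sum_ideal p B"
    then obtain B where IB: "I = carry_sum_ideal p B" by blast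
    show "GL_invariant I"
      unfolding GL_invariant_def
    proof (intro ballI subsetI)
      fix g :: "'n \<Rightarrow> 'n \<Rightarrow> 'k" and y assume "g \<in> GL" "y \<in> act g ` I"
      then obtain f where fI: "f \<in> I" and y: "y = act g f" by blast
      have T: "is_ideal {f. act g f \<in> I}" by (rule preimage_ideal[OF Iid])
      have "I \<subseteq> {f. act g f \<in> I}"
        unfolding IB carry_sum_ideal_def
      proof (rule ideal_gen_least[OF T[unfolded IB carry_sum_ideal_def]])
        let ?J = "ideal_gen (\<Union>(d, c)\<in>B. carry_ideal p d c) :: ('n, 'k) mpoly set"
        show "(\<Union>(d, c)\<in>B. carry_ideal p d c) \<subseteq> {f. act g f \<in> ?J}"
        proof
          fix x :: "('n, 'k) mpoly" assume "x \<in> (\<Union>(d, c)\<in>B. carry_ideal p d c)"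
          then obtain d c where dcB: "(d, c) \<in> B" and x: "x \<in> carry_ideal p d c" by auto
          have Jid: "is_ideal ?J" by (rule ideal_gen_ideal)
          have cJ: "carry_ideal p d c \<subseteq> ?J" using dcB by (intro subset_trans[OF _ ideal_gen_sub]) auto
          have "carry_ideal p d c \<subseteq> {f. act g f \<in> ?J}"
            unfolding carry_ideal_def[of p d c]
          proof (rule ideal_gen_least[OF preimage_ideal[OF Jid]])
            show "{monomial_x b |b. mdeg b = d \<and> carry p b \<le> c} \<subseteq> {f. act g f \<in> ?J}"
            proof
              fix z :: "('n, 'k) mpoly" assume "z \<in> {monomial_x b |b. mdeg b = d \<and> carry p b \<le> c}"
              then obtain b :: "'n \<Rightarrow>\<^sub>0 nat" where z: "z = monomial_x b" and bd: "mdeg b = d" and bc: "carry p b \<le> c"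
                by blast
              have "act g (monomial_x b) \<in> ?J"
              proof (rule ideal_of_monomials[OF Jid])
                fix a assume ak: "a \<in> Poly_Mapping.keys (act g (monomial_x b :: ('n, 'k) mpoly))"
                have ad: "mdeg a = mdeg b" using act_monomial_keys(1)[OF pr ch ak] .
                have "\<forall>l. Sm p (lk a) l \<le> Sm p (lk b) l" using act_monomial_keys(2)[OF pr ch ak] by blast
                then have "carry p a \<le> carry p b" using carry_le_iff[OF p1 ad] by simp
                then have "carry p a \<le> c" using bc by (rule order_trans)
                then have "monomial_x a \<in> (carry_ideal p d c :: ('n, 'k) mpoly set)"
                  unfolding carry_ideal_def using ad bd by (intro subsetD[OF ideal_gen_sub]) auto
                then show "monomial_x a \<in> ?J" using cJ by blast
              qed
              then show "z \<in> {f. act g f \<in> ?J}" using z by simp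
            qed
          qed
          then show "x \<in> {f. act g f \<in> ?J}" using x by blast
        qed
      qed
      then show "y \<in> I" using fI y by blast
    qed
  qed
qed


end
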